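(* Consider the first-order quasi-linear system for $U=(U_1,U_2,U_3,U_4)^t=(\theta,\alpha,H,P)^t$ as functions of $(r,\phi)$, $r>0$: $$A(r,\phi,U)U_r+B(r,\phi,U)U_\phi+C(r,\phi,U)U=0,$$ with $s=\sin(\theta-\phi)$, $c=\cos(\theta-\phi)$ and $$A=\begin{pmatrix}\frac13sH+c\alpha& s&0&0\\ -c\alpha&s&0&0\\ 0&6s\alpha&-c\alpha&s\\ 2c\alpha^2&2s\alpha&-\frac23sH-c\alpha&-s\end{pmatrix},\quad B=\frac1r\begin{pmatrix}-\frac13cH+s\alpha&-c&0&0\\ -s\alpha&-c&0&0\\ 0&-6c\alpha&-s\alpha&-c\\ 2s\alpha^2&-2c\alpha&\frac23cH-s\alpha&c\end{pmatrix},$$ $$C=-\begin{pmatrix}0&-\alpha&0&0\\0&2\alpha&0&0\\0&4\alpha^2&\alpha H&0\\0&0&\alpha H&0\end{pmatrix}.$$ Let $U$ and $V$ be smooth solutions on a neighborhood of the curve $\{r=\mathbf{c}\}$, $\mathbf{c}>0$, such that $\det A(r,\phi,U)\neq0$ on this curve and $U(\mathbf{c},\phi)=V(\mathbf{c},\phi)$ for all $\phi$. Then $U=V$ on a neighborhood of the curve $r=\mathbf{c}$.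
   Context: This system is the one satisfied by $U=(\theta,\alpha,H,-N^\perp\alpha)$ for an absolute $E_1$-minimizing graph in the Heisenberg group, written in polar coordinates; one has $\det A=s^2(\frac13sH+2c\alpha)(\frac23sH+2c\alpha)$. *)

theory Defs
  imports "HOL-Analysis.Analysis"
begin

fun Ck_on :: "nat \<Rightarrow> 'a::real_normed_vector set \<Rightarrow> ('a \<Rightarrow> 'b::real_normed_vector) \<Rightarrow> bool" where
  "Ck_on 0 S f = continuous_on S f"
| "Ck_on (Suc k) S f =
     (\<exists>f'. (\<forall>x\<in>S. (f has_derivative f' x) (at x)) \<and> (\<forall>v. Ck_on k S (\<lambda>x. f' x v)))"

definition smooth_on :: "'a::real_normed_vector set \<Rightarrow> ('a \<Rightarrow> 'b::real_normed_vector) \<Rightarrow> bool" where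
  "smooth_on S f \<longleftrightarrow> (\<forall>k. Ck_on k S f)"

text \<open>Partial derivatives in the polar coordinates (r, phi); points are pairs (r, phi).\<close>
definition d_r :: "(real \<times> real \<Rightarrow> real^4) \<Rightarrow> real \<times> real \<Rightarrow> real^4" where
  "d_r U p = frechet_derivative U (at p) (1, 0)"

definition d_phi :: "(real \<times> real \<Rightarrow> real^4) \<Rightarrow> real \<times> real \<Rightarrow> real^4" where
  "d_phi U p = frechet_derivative U (at p) (0, 1)"

definition matA :: "real \<Rightarrow> real \<Rightarrow> real^4 \<Rightarrow> real^4^4" where
  "matA r phi u = (let th = u$1; al = u$2; H = u$3; s = sin (th - phi); c = cos (th - phi) in
     vector [ vector [s* H/3 + c* al, s, 0, 0],
              vector [- c* al, s, 0, 0],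
              vector [0, 6* s* al, - c* al, s],
              vector [2* c* al^2, 2* s* al, - (2/3)* s* H - c* al, - s] ])"

definition matB :: "real \<Rightarrow> real \<Rightarrow> real^4 \<Rightarrow> real^4^4" where
  "matB r phi u = (let th = u$1; al = u$2; H = u$3; s = sin (th - phi); c = cos (th - phi) in
     (1 / r) *\<^sub>R
     vector [ vector [- c* H/3 + s* al, - c, 0, 0],
              vector [- s* al, - c, 0, 0],
              vector [0, - 6* c* al, - s* al, - c],
              vector [2* s* al^2, - 2* c* al, (2/3)* c* H - s* al, c] ])"

definition matC :: "real \<Rightarrow> real \<Rightarrow> real^4 \<Rightarrow> real^4^4" where
  "matC r phi u = (let al = u$2; H = u$3 in
     - vector [ vector [0, - al, 0, 0],
                vector [0, 2* al, 0, 0],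
                vector [0, 4* al^2, al* H, 0],
                vector [0, 0, al* H, 0] ])"

definition solves_on :: "(real \<times> real) set \<Rightarrow> (real \<times> real \<Rightarrow> real^4) \<Rightarrow> bool" where
  "solves_on S U \<longleftrightarrow> (\<forall>p\<in>S.
      matA (fst p) (snd p) (U p) *v d_r U p + matB (fst p) (snd p) (U p) *v d_phi U p
      + matC (fst p) (snd p) (U p) *v U p = 0)"

end

theory Submission
  imports Defs
begin

lemma id1:
  fixes s c s' c' a a' H H' ir r1 f1 R1 F1 :: real
  assumes EU: "(s * H / 3 + 2 * c * a) * r1 + ir * (2 * s * a - c * H / 3) * f1 + 3 * a * a = 0"
    and EV: "(s' * H' / 3 + 2 * c' * a') * R1 + ir * (2 * s' * a' - c' * H' / 3) * F1 + 3 * a' * a' = 0"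
  shows "(s * H / 3 + 2 * c * a) * (r1 - R1) + ir * (2 * s * a - c * H / 3) * (f1 - F1) =
    (- 3 * (a + a') - 2 * c * R1 - 2 * ir * s * F1) * (a - a') + (- s * R1 / 3 + ir * c * F1 / 3) * (H - H')
    + (- H' * R1 / 3 - 2 * ir * a' * F1) * (s - s') + (- 2 * a' * R1 + ir * H' * F1 / 3) * (c - c')"
proof -
  have "(s * H / 3 + 2 * c * a) * (r1 - R1) + ir * (2 * s * a - c * H / 3) * (f1 - F1) -
    ((- 3 * (a + a') - 2 * c * R1 - 2 * ir * s * F1) * (a - a') + (- s * R1 / 3 + ir * c * F1 / 3) * (H - H')
    + (- H' * R1 / 3 - 2 * ir * a' * F1) * (s - s') + (- 2 * a' * R1 + ir * H' * F1 / 3) * (c - c'))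
    = ((s * H / 3 + 2 * c * a) * r1 + ir * (2 * s * a - c * H / 3) * f1 + 3 * a * a)
     - ((s' * H' / 3 + 2 * c' * a') * R1 + ir * (2 * s' * a' - c' * H' / 3) * F1 + 3 * a' * a')"
    by (simp add: field_simps) (simp add: algebra_simps)?
  then show ?thesis using EU EV by simp
qed

lemma id2:
  fixes s c s' c' a a' H H' ir t t' r1 r2 r3 f1 f2 f3 R1 R2 F1 F2 :: real
  assumes EU: "H / 3 * (s * r1 - ir * c * f1) + 2 * (s * r2 - ir * c * f2) - a * a = 0"
    and EV: "H' / 3 * (s' * R1 - ir * c' * F1) + 2 * (s' * R2 - ir * c' * F2) - a' * a' = 0"
  shows "s * (r3 / 3 * (t - t') + H / 3 * (r1 - R1) + 2 * (r2 - R2))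
       + (- ir * c) * (f3 / 3 * (t - t') + H / 3 * (f1 - F1) + 2 * (f2 - F2)) =
    (s * r3 - ir * c * f3) / 3 * (t - t') + (a + a') * (a - a') - (s' * R1 - ir * c' * F1) / 3 * (H - H')
    + (- (H / 3) * R1 - 2 * R2) * (s - s') + (ir * H / 3 * F1 + 2 * ir * F2) * (c - c')"
proof -
  have "s * (r3 / 3 * (t - t') + H / 3 * (r1 - R1) + 2 * (r2 - R2))
       + (- ir * c) * (f3 / 3 * (t - t') + H / 3 * (f1 - F1) + 2 * (f2 - F2)) -
    ((s * r3 - ir * c * f3) / 3 * (t - t') + (a + a') * (a - a') - (s' * R1 - ir * c' * F1) / 3 * (H - H')
    + (- (H / 3) * R1 - 2 * R2) * (s - s') + (ir * H / 3 * F1 + 2 * ir * F2) * (c - c'))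
    = (H / 3 * (s * r1 - ir * c * f1) + 2 * (s * r2 - ir * c * f2) - a * a)
     - (H' / 3 * (s' * R1 - ir * c' * F1) + 2 * (s' * R2 - ir * c' * F2) - a' * a')"
    by (simp add: field_simps) (simp add: algebra_simps)?
  then show ?thesis using EU EV by simp
qed

lemma id3:
  fixes s c s' c' a a' H H' ir t t' r1 r2 r3 r4 f1 f2 f3 f4 R1 R2 R3 R4 F1 F2 F3 F4 :: real
  assumes EU: "2 * a * H / 3 * (s * r1 - ir * c * f1) + 6 * a * (s * r2 - ir * c * f2)
      + 2 * H / 3 * (s * r3 - ir * c * f3) + 2 * (s * r4 - ir * c * f4) - 2 * a * a * a = 0"
    and EV: "2 * a' * H' / 3 * (s' * R1 - ir * c' * F1) + 6 * a' * (s' * R2 - ir * c' * F2)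
      + 2 * H' / 3 * (s' * R3 - ir * c' * F3) + 2 * (s' * R4 - ir * c' * F4) - 2 * a' * a' * a' = 0"
  shows "s * (2 * (r2 * H + a * r3) / 3 * (t - t') + 2 * a * H / 3 * (r1 - R1) + 6 * r2 * (a - a')
          + 6 * a * (r2 - R2) + 2 * r3 / 3 * (H - H') + 2 * H / 3 * (r3 - R3) + 2 * (r4 - R4))
       + (- ir * c) * (2 * (f2 * H + a * f3) / 3 * (t - t') + 2 * a * H / 3 * (f1 - F1) + 6 * f2 * (a - a')
          + 6 * a * (f2 - F2) + 2 * f3 / 3 * (H - H') + 2 * H / 3 * (f3 - F3) + 2 * (f4 - F4)) =
    2 * ((s * r2 - ir * c * f2) * H + a * (s * r3 - ir * c * f3)) / 3 * (t - t')
    + (6 * (s * r2 - ir * c * f2) + 2 * (a * a + a * a' + a' * a') - 2 * H' / 3 * (s' * R1 - ir * c' * F1)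
       - 6 * (s' * R2 - ir * c' * F2)) * (a - a')
    + (2 * (s * r3 - ir * c * f3) / 3 - 2 * a / 3 * (s' * R1 - ir * c' * F1) - 2 / 3 * (s' * R3 - ir * c' * F3)) * (H - H')
    + (- (2 * a * H / 3 * R1 + 6 * a * R2 + 2 * H / 3 * R3 + 2 * R4)) * (s - s')
    + (ir * (2 * a * H / 3 * F1 + 6 * a * F2 + 2 * H / 3 * F3 + 2 * F4)) * (c - c')"
proof -
  have "s * (2 * (r2 * H + a * r3) / 3 * (t - t') + 2 * a * H / 3 * (r1 - R1) + 6 * r2 * (a - a')
          + 6 * a * (r2 - R2) + 2 * r3 / 3 * (H - H') + 2 * H / 3 * (r3 - R3) + 2 * (r4 - R4))
       + (- ir * c) * (2 * (f2 * H + a * f3) / 3 * (t - t') + 2 * a * H / 3 * (f1 - F1) + 6 * f2 * (a - a')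
          + 6 * a * (f2 - F2) + 2 * f3 / 3 * (H - H') + 2 * H / 3 * (f3 - F3) + 2 * (f4 - F4)) -
    (2 * ((s * r2 - ir * c * f2) * H + a * (s * r3 - ir * c * f3)) / 3 * (t - t')
    + (6 * (s * r2 - ir * c * f2) + 2 * (a * a + a * a' + a' * a') - 2 * H' / 3 * (s' * R1 - ir * c' * F1)
       - 6 * (s' * R2 - ir * c' * F2)) * (a - a')
    + (2 * (s * r3 - ir * c * f3) / 3 - 2 * a / 3 * (s' * R1 - ir * c' * F1) - 2 / 3 * (s' * R3 - ir * c' * F3)) * (H - H')
    + (- (2 * a * H / 3 * R1 + 6 * a * R2 + 2 * H / 3 * R3 + 2 * R4)) * (s - s')
    + (ir * (2 * a * H / 3 * F1 + 6 * a * F2 + 2 * H / 3 * F3 + 2 * F4)) * (c - c'))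
    = (2 * a * H / 3 * (s * r1 - ir * c * f1) + 6 * a * (s * r2 - ir * c * f2)
      + 2 * H / 3 * (s * r3 - ir * c * f3) + 2 * (s * r4 - ir * c * f4) - 2 * a * a * a)
     - (2 * a' * H' / 3 * (s' * R1 - ir * c' * F1) + 6 * a' * (s' * R2 - ir * c' * F2)
      + 2 * H' / 3 * (s' * R3 - ir * c' * F3) + 2 * (s' * R4 - ir * c' * F4) - 2 * a' * a' * a')"
    by (simp add: field_simps) (simp add: algebra_simps)?
  then show ?thesis using EU EV by simp
qed

lemma id4:
  fixes s c s' c' a a' H H' ir t t' r1 r2 r3 f1 f2 f3 R1 R3 F1 F3 :: real
  assumes EU: "(s * H / 3 + c * a) * (5 * a * r1 + r3) + ir * (s * a - c * H / 3) * (5 * a * f1 + f3) + 9 * a * a * a + a * H * H = 0"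
    and EV: "(s' * H' / 3 + c' * a') * (5 * a' * R1 + R3) + ir * (s' * a' - c' * H' / 3) * (5 * a' * F1 + F3) + 9 * a' * a' * a' + a' * H' * H' = 0"
  shows "(s * H / 3 + c * a) * (5 * r2 * (t - t') + 5 * a * (r1 - R1) + (r3 - R3))
     + ir * (s * a - c * H / 3) * (5 * f2 * (t - t') + 5 * a * (f1 - F1) + (f3 - F3)) =
    5 * ((s * H / 3 + c * a) * r2 + ir * (s * a - c * H / 3) * f2) * (t - t')
    + (- 9 * (a * a + a * a' + a' * a') - H * H - c * (5 * a' * R1 + R3) - ir * s * (5 * a' * F1 + F3)
       - 5 * ((s * H / 3 + c * a) * R1 + ir * (s * a - c * H / 3) * F1)) * (a - a')
    + (- a' * (H + H') - s * (5 * a' * R1 + R3) / 3 + ir * c * (5 * a' * F1 + F3) / 3) * (H - H')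
    + (- H' * (5 * a' * R1 + R3) / 3 - ir * a' * (5 * a' * F1 + F3)) * (s - s')
    + (- a' * (5 * a' * R1 + R3) + ir * H' * (5 * a' * F1 + F3) / 3) * (c - c')"
proof -
  have "(s * H / 3 + c * a) * (5 * r2 * (t - t') + 5 * a * (r1 - R1) + (r3 - R3))
     + ir * (s * a - c * H / 3) * (5 * f2 * (t - t') + 5 * a * (f1 - F1) + (f3 - F3)) -
    (5 * ((s * H / 3 + c * a) * r2 + ir * (s * a - c * H / 3) * f2) * (t - t')
    + (- 9 * (a * a + a * a' + a' * a') - H * H - c * (5 * a' * R1 + R3) - ir * s * (5 * a' * F1 + F3)
       - 5 * ((s * H / 3 + c * a) * R1 + ir * (s * a - c * H / 3) * F1)) * (a - a')
    + (- a' * (H + H') - s * (5 * a' * R1 + R3) / 3 + ir * c * (5 * a' * F1 + F3) / 3) * (H - H')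
    + (- H' * (5 * a' * R1 + R3) / 3 - ir * a' * (5 * a' * F1 + F3)) * (s - s')
    + (- a' * (5 * a' * R1 + R3) + ir * H' * (5 * a' * F1 + F3) / 3) * (c - c'))
    = ((s * H / 3 + c * a) * (5 * a * r1 + r3) + ir * (s * a - c * H / 3) * (5 * a * f1 + f3) + 9 * a * a * a + a * H * H)
     - ((s' * H' / 3 + c' * a') * (5 * a' * R1 + R3) + ir * (s' * a' - c' * H' / 3) * (5 * a' * F1 + F3) + 9 * a' * a' * a' + a' * H' * H')"
    by (simp add: field_simps) (simp add: algebra_simps)?
  then show ?thesis using EU EV by simp
qed

lemma Ecomb:
  fixes s c a H ir x1 x2 x3 x4 y1 y2 y3 y4 :: real
  assumes R1: "(s * H / 3 + c * a) * x1 + s * x2 + ir * ((- c * H / 3 + s * a) * y1 - c * y2) + a * a = 0"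
    and R2: "(- c * a) * x1 + s * x2 + ir * ((- s * a) * y1 - c * y2) - 2 * a * a = 0"
    and R3: "6 * s * a * x2 - c * a * x3 + s * x4 + ir * (- 6 * c * a * y2 - s * a * y3 - c * y4) - 4 * a * a * a - a * H * H = 0"
    and R4: "2 * c * a^2 * x1 + 2 * s * a * x2 + (- (2/3) * s * H - c * a) * x3 - s * x4 + ir * (2 * s * a^2 * y1 - 2 * c * a * y2 + ((2/3) * c * H - s * a) * y3 + c * y4) - a * H * H = 0"
  shows "(s * H / 3 + 2 * c * a) * x1 + ir * (2 * s * a - c * H / 3) * y1 + 3 * a * a = 0"
    "H / 3 * (s * x1 - ir * c * y1) + 2 * (s * x2 - ir * c * y2) - a * a = 0"
    "2 * a * H / 3 * (s * x1 - ir * c * y1) + 6 * a * (s * x2 - ir * c * y2)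
      + 2 * H / 3 * (s * x3 - ir * c * y3) + 2 * (s * x4 - ir * c * y4) - 2 * a * a * a = 0"
    "(s * H / 3 + c * a) * (5 * a * x1 + x3) + ir * (s * a - c * H / 3) * (5 * a * y1 + y3) + 9 * a * a * a + a * H * H = 0"
proof -
  let ?R1 = "(s * H / 3 + c * a) * x1 + s * x2 + ir * ((- c * H / 3 + s * a) * y1 - c * y2) + a * a"
  let ?R2 = "(- c * a) * x1 + s * x2 + ir * ((- s * a) * y1 - c * y2) - 2 * a * a"
  let ?R3 = "6 * s * a * x2 - c * a * x3 + s * x4 + ir * (- 6 * c * a * y2 - s * a * y3 - c * y4) - 4 * a * a * a - a * H * H"
  let ?R4 = "2 * c * a^2 * x1 + 2 * s * a * x2 + (- (2/3) * s * H - c * a) * x3 - s * x4 + ir * (2 * s * a^2 * y1 - 2 * c * a * y2 + ((2/3) * c * H - s * a) * y3 + c * y4) - a * H * H"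
  have e1: "(s * H / 3 + 2 * c * a) * x1 + ir * (2 * s * a - c * H / 3) * y1 + 3 * a * a = ?R1 - ?R2"
    by (simp add: field_simps) (simp add: algebra_simps)?
  show "(s * H / 3 + 2 * c * a) * x1 + ir * (2 * s * a - c * H / 3) * y1 + 3 * a * a = 0" unfolding e1 using R1 R2 R3 R4 by (metis add_0 diff_zero mult_zero_right minus_zero neg_0_equal_iff_equal divide_eq_0_iff)
  have e2: "H / 3 * (s * x1 - ir * c * y1) + 2 * (s * x2 - ir * c * y2) - a * a = ?R1 + ?R2"
    by (simp add: field_simps) (simp add: algebra_simps)?
  show "H / 3 * (s * x1 - ir * c * y1) + 2 * (s * x2 - ir * c * y2) - a * a = 0" unfolding e2 using R1 R2 R3 R4 by (metis add_0 diff_zero mult_zero_right minus_zero neg_0_equal_iff_equal divide_eq_0_iff)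
  have e3: "2 * a * H / 3 * (s * x1 - ir * c * y1) + 6 * a * (s * x2 - ir * c * y2)
      + 2 * H / 3 * (s * x3 - ir * c * y3) + 2 * (s * x4 - ir * c * y4) - 2 * a * a * a = 2 * a * ?R1 + ?R3 - ?R4"
    by (simp add: field_simps power2_eq_square) (simp add: algebra_simps)?
  show "2 * a * H / 3 * (s * x1 - ir * c * y1) + 6 * a * (s * x2 - ir * c * y2)
      + 2 * H / 3 * (s * x3 - ir * c * y3) + 2 * (s * x4 - ir * c * y4) - 2 * a * a * a = 0" unfolding e3 using R1 R2 R3 R4 by (metis add_0 diff_zero mult_zero_right minus_zero neg_0_equal_iff_equal divide_eq_0_iff)
  have e4: "(s * H / 3 + c * a) * (5 * a * x1 + x3) + ir * (s * a - c * H / 3) * (5 * a * y1 + y3) + 9 * a * a * a + a * H * H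
     = - (- 10 * a * ?R1 + 2 * a * ?R2 + ?R3 + ?R4) / 2"
    by (simp add: field_simps power2_eq_square) (simp add: algebra_simps)?
  show "(s * H / 3 + c * a) * (5 * a * x1 + x3) + ir * (s * a - c * H / 3) * (5 * a * y1 + y3) + 9 * a * a * a + a * H * H = 0"
    unfolding e4 using R1 R2 R3 R4 by (metis add_0 diff_zero mult_zero_right minus_zero neg_0_equal_iff_equal divide_eq_0_iff)
qed

lemma maxprin:
  fixes q \<beta> :: "nat \<Rightarrow> real \<times> real \<Rightarrow> real" and Dq :: "nat \<Rightarrow> real \<times> real \<Rightarrow> real \<times> real \<Rightarrow> real"
  assumes Ddef: "D = {p. \<bar>fst p - c\<bar> \<le> \<delta> \<and> \<bar>snd p - \<phi>0\<bar> \<le> \<rho> - L * \<bar>fst p - c\<bar>}"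
    and L: "L \<ge> 0" and K: "K \<ge> 0"
    and der: "\<And>i p. i < n \<Longrightarrow> p \<in> D \<Longrightarrow> (q i has_derivative Dq i p) (at p)"
    and bet: "\<And>i p. i < n \<Longrightarrow> p \<in> D \<Longrightarrow> \<bar>\<beta> i p\<bar> \<le> L"
    and bnd: "\<And>i p. i < n \<Longrightarrow> p \<in> D \<Longrightarrow> \<bar>Dq i p (1, \<beta> i p)\<bar> \<le> K * (\<Sum>j<n. \<bar>q j p\<bar>)"
    and init: "\<And>i p. i < n \<Longrightarrow> p \<in> D \<Longrightarrow> fst p = c \<Longrightarrow> q i p = 0"
  shows "\<And>i p. i < n \<Longrightarrow> p \<in> D \<Longrightarrow> q i p = 0"
proof -
  fix i0 p0 assume i0: "i0 < n" and p0: "p0 \<in> D"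
  have clD: "closed D" unfolding Ddef
    by (intro closed_Collect_conj closed_Collect_le continuous_intros)
  have bdD: "bounded D"
  proof -
    have "norm p \<le> \<bar>c\<bar> + \<bar>\<delta>\<bar> + \<bar>\<phi>0\<bar> + \<bar>\<rho>\<bar>" if "p \<in> D" for p
    proof -
      have "\<bar>fst p - c\<bar> \<le> \<delta>" "\<bar>snd p - \<phi>0\<bar> \<le> \<rho> - L * \<bar>fst p - c\<bar>" using that unfolding Ddef
        by auto
      moreover have "L * \<bar>fst p - c\<bar> \<ge> 0" using L by simp
      moreover have "norm p \<le> \<bar>fst p\<bar> + \<bar>snd p\<bar>"
        by (metis norm_Pair_le prod.collapse real_norm_def)
      ultimately show ?thesis by linarith
    qed
    then show ?thesis unfolding bounded_iff by blast
  qed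
  have cpD: "compact D" using clD bdD by (simp add: compact_eq_bounded_closed)
  define K' where "K' = K * real n + 1"
  have K'pos: "K' > 0" unfolding K'_def using K by (simp add: add_nonneg_pos)
  define z where "z i p = exp (- K' * \<bar>fst p - c\<bar>) * q i p" for i p
  have contq: "continuous_on D (q i)" if "i < n" for i
    using der[OF that] by (meson continuous_at_imp_continuous_on has_derivative_continuous)
  have contz: "continuous_on D (\<lambda>p. \<bar>z i p\<bar>)" if "i < n" for i
    unfolding z_def by (intro continuous_intros contq that)
  have "\<exists>pm. pm \<in> D \<and> (\<forall>p\<in>D. \<bar>z i p\<bar> \<le> \<bar>z i pm\<bar>)" if "i < n" for i
    using continuous_attains_sup[OF cpD _ contz[OF that]] p0 by blast
  then obtain pm where pm: "\<And>i. i < n \<Longrightarrow> pm i \<in> D \<and> (\<forall>p\<in>D. \<bar>z i p\<bar> \<le> \<bar>z i (pm i)\<bar>)"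
    by metis
  define M where "M = Max ((\<lambda>i. \<bar>z i (pm i)\<bar>) ` {..<n})"
  have "M \<in> (\<lambda>i. \<bar>z i (pm i)\<bar>) ` {..<n}" unfolding M_def
    using i0 by (intro Max_in) auto
  then obtain i1 where i1: "i1 < n" and M1: "M = \<bar>z i1 (pm i1)\<bar>" by auto
  have Mbound: "\<bar>z i p\<bar> \<le> M" if "i < n" "p \<in> D" for i p
  proof -
    have "\<bar>z i p\<bar> \<le> \<bar>z i (pm i)\<bar>" using pm that by blast
    also have "\<dots> \<le> M" unfolding M_def using that by (intro Max_ge) auto
    finally show ?thesis .
  qed
  have M0: "M = 0"
  proof (rule ccontr)
    assume "M \<noteq> 0"
    then have Mpos: "M > 0" using M1 by simp
    define p where "p = pm i1"
    have pD: "p \<in> D" using pm i1 p_def by blast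
    have qne: "q i1 p \<noteq> 0" using Mpos M1 unfolding p_def z_def by auto
    then have fne: "fst p \<noteq> c" using init[OF i1 pD] by blast
    define d where "d = \<bar>fst p - c\<bar>"
    have dpos: "d > 0" using fne d_def by simp
    define \<sigma> where "\<sigma> = sgn (fst p - c)"
    have sig: "\<sigma> * \<sigma> = 1" "\<sigma> * (fst p - c) = d" using fne unfolding \<sigma>_def d_def
      by (auto simp: sgn_if)
    define \<epsilon> where "\<epsilon> = sgn (q i1 p)"
    have eps: "\<epsilon> * q i1 p = \<bar>q i1 p\<bar>" "\<bar>\<epsilon>\<bar> = 1" using qne unfolding \<epsilon>_def
      by (auto simp: sgn_if)
    define b where "b = \<beta> i1 p"
    have bL: "\<bar>b\<bar> \<le> L" using bet[OF i1 pD] b_def by simp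
    define v where "v = (\<sigma>, \<sigma> * b)"
    define e where "e = exp (- K' * d)"
    define g where "g t = \<epsilon> * (exp (- K' * (d - t)) * q i1 (p - t *\<^sub>R v))" for t
    have zp: "\<bar>z i1 p\<bar> = e * \<bar>q i1 p\<bar>" unfolding z_def e_def d_def by (simp add: abs_mult)
    have g0: "g 0 = M" unfolding g_def M1 p_def[symmetric] zp
      using eps by (simp add: e_def)
    have f1g: "\<bar>fst (p - t *\<^sub>R v) - c\<bar> = d - t" if "0 < t" "t \<le> d" for t
  proof -
      have "fst p - c = \<sigma> * d" using sig
        by (metis mult.assoc mult_1)
      then have "fst (p - t *\<^sub>R v) - c = \<sigma> * (d - t)"
        unfolding v_def by (simp add: algebra_simps)
      moreover have "\<bar>\<sigma>\<bar> = 1" using fne \<sigma>_def by (simp add: sgn_if)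
      ultimately show ?thesis using that by (simp add: abs_mult)
    qed
    have inD: "p - t *\<^sub>R v \<in> D" if "0 < t" "t \<le> d" for t
    proof -
      have f1: "\<bar>fst (p - t *\<^sub>R v) - c\<bar> = d - t" using f1g that by blast
      have "\<bar>snd (p - t *\<^sub>R v) - \<phi>0\<bar> \<le> \<bar>snd p - \<phi>0\<bar> + t * \<bar>b\<bar>"
      proof -
        have "\<bar>\<sigma>\<bar> = 1" using fne \<sigma>_def by (simp add: sgn_if)
        then have "\<bar>t * (\<sigma> * b)\<bar> = t * \<bar>b\<bar>" using that by (simp add: abs_mult)
        then show ?thesis unfolding v_def by simp
      qed
      also have "\<dots> \<le> \<rho> - L * d + t * L"
      proof -
        have "t * \<bar>b\<bar> \<le> t * L" using bL that by (intro mult_left_mono) auto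
        then show ?thesis using pD unfolding Ddef d_def by auto
      qed
      also have "\<dots> = \<rho> - L * \<bar>fst (p - t *\<^sub>R v) - c\<bar>" unfolding f1 by (simp add: algebra_simps)
      finally show ?thesis unfolding Ddef using f1 pD that unfolding Ddef d_def by auto
    qed
    have gle: "g t \<le> M" if "0 < t" "t \<le> d" for t
    proof -
      have f1: "\<bar>fst (p - t *\<^sub>R v) - c\<bar> = d - t" using f1g that by blast
      have "g t = \<epsilon> * z i1 (p - t *\<^sub>R v)" unfolding g_def z_def f1 by simp
      also have "\<dots> \<le> \<bar>z i1 (p - t *\<^sub>R v)\<bar>" using eps
        by (metis abs_ge_self abs_mult mult_1 order_trans)
      also have "\<dots> \<le> M" by (rule Mbound[OF i1 inD[OF that]])
      finally show ?thesis .
    qed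
    have lin: "linear (Dq i1 p)" using der[OF i1 pD] has_derivative_linear by blast
    define g' where "g' = \<epsilon> * (K' * e * q i1 p + e * Dq i1 p (- v))"
    have dq: "((\<lambda>t. q i1 (p - t *\<^sub>R v)) has_derivative (\<lambda>h. Dq i1 p (- (h *\<^sub>R v)))) (at 0)"
    proof -
      have "((\<lambda>t. p - t *\<^sub>R v) has_derivative (\<lambda>h. - (h *\<^sub>R v))) (at 0)"
        by (auto intro!: derivative_eq_intros)
      moreover have "(q i1 has_derivative Dq i1 p) (at (p - 0 *\<^sub>R v))" using der[OF i1 pD] by simp
      ultimately show ?thesis using has_derivative_compose by (metis (no_types) diff_chain_at)
    qed
    have "(g has_real_derivative g') (at 0)"
    proof -
      have dq': "((\<lambda>t. q i1 (p - t *\<^sub>R v)) has_real_derivative Dq i1 p (- v)) (at 0)"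
      proof -
        have "(\<lambda>h. Dq i1 p (- (h *\<^sub>R v))) = (\<lambda>h. Dq i1 p (- v) * h)"
        proof
          fix h show "Dq i1 p (- (h *\<^sub>R v)) = Dq i1 p (- v) * h"
            using linear_cmul[OF lin, of h "- v"] by simp
        qed
        then show ?thesis using dq unfolding has_field_derivative_def by metis
      qed
      have de: "((\<lambda>t. exp (- K' * (d - t))) has_real_derivative exp (- K' * (d - 0)) * K') (at 0)"
        by (auto intro!: derivative_eq_intros)
      have "(g has_real_derivative \<epsilon> * (exp (- K' * (d - 0)) * K' * q i1 (p - 0 *\<^sub>R v)
          + Dq i1 p (- v) * exp (- K' * (d - 0)))) (at 0)"
        unfolding g_def by (intro DERIV_cmult DERIV_mult de dq')
      then show ?thesis unfolding g'_def e_def by (simp add: algebra_simps)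
    qed
    moreover have "g' > 0"
    proof -
      have vv: "- v = (- \<sigma>) *\<^sub>R (1, b)" unfolding v_def by simp
      have dqv: "Dq i1 p (- v) = - \<sigma> * Dq i1 p (1, b)"
        unfolding vv linear_cmul[OF lin] by simp
      have "\<bar>\<sigma>\<bar> = 1" using fne \<sigma>_def by (simp add: sgn_if)
      have sumz: "e * (\<Sum>j<n. \<bar>q j p\<bar>) = (\<Sum>j<n. \<bar>z j p\<bar>)"
        unfolding z_def e_def d_def by (simp add: sum_distrib_left abs_mult)
      have "(\<Sum>j<n. \<bar>z j p\<bar>) \<le> (\<Sum>j<n. M)" by (intro sum_mono Mbound pD) auto
      then have sz: "(\<Sum>j<n. \<bar>z j p\<bar>) \<le> real n * M" by simp
      have epos: "e > 0" unfolding e_def by simp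
      have "\<bar>\<epsilon> * e * Dq i1 p (- v)\<bar> = e * \<bar>Dq i1 p (1, b)\<bar>"
        using eps(2) \<open>\<bar>\<sigma>\<bar> = 1\<close> epos unfolding dqv by (simp add: abs_mult)
      also have "\<dots> \<le> e * (K * (\<Sum>j<n. \<bar>q j p\<bar>))"
        using bnd[OF i1 pD] epos unfolding b_def by (intro mult_left_mono) auto
      also have "\<dots> = K * (\<Sum>j<n. \<bar>z j p\<bar>)" using sumz by (simp add: algebra_simps)
      also have "\<dots> \<le> K * (real n * M)" using sz K by (intro mult_left_mono)
      finally have A: "\<bar>\<epsilon> * e * Dq i1 p (- v)\<bar> \<le> K * (real n * M)" .
      have B: "\<epsilon> * (K' * e * q i1 p) = K' * M"
        using M1 zp eps unfolding p_def[symmetric] by (simp add: algebra_simps)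
      have "g' = K' * M + \<epsilon> * e * Dq i1 p (- v)" unfolding g'_def using B by (simp add: algebra_simps)
      moreover have "K' * M = K * real n * M + M" unfolding K'_def by (simp add: algebra_simps)
      moreover have "\<epsilon> * e * Dq i1 p (- v) \<ge> - (K * real n * M)" using A
        by (simp add: abs_le_iff mult.assoc)
      ultimately show ?thesis using Mpos by linarith
    qed
    ultimately obtain dd where dd: "dd > 0" "\<And>h. h > 0 \<Longrightarrow> h < dd \<Longrightarrow> g 0 < g (0 + h)"
      using DERIV_pos_inc_right by blast
    define h where "h = min (dd / 2) d"
    have "h > 0" "h < dd" "h \<le> d" using dd dpos unfolding h_def by auto
    then have "g 0 < g h" "g h \<le> M" using dd(2) gle by auto
    then show False using g0 by simp
  qed
  have "\<bar>z i0 p0\<bar> \<le> 0" using Mbound[OF i0 p0] M0 by simp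
  then show "q i0 p0 = 0" unfolding z_def by simp
qed

lemma vector_4 [simp]:
 "(vector [x,y,z,w] ::('a::zero)^4)$1 = x"
 "(vector [x,y,z,w] ::('a::zero)^4)$2 = y"
 "(vector [x,y,z,w] ::('a::zero)^4)$3 = z"
 "(vector [x,y,z,w] ::('a::zero)^4)$4 = w"
  unfolding vector_def by simp_all

lemma rows:
  fixes u x y :: "real^4"
  assumes "matA r phi u *v x + matB r phi u *v y + matC r phi u *v u = 0"
  defines "s \<equiv> sin ((u$1) - phi)" and "c \<equiv> cos ((u$1) - phi)" and "a \<equiv> (u$2)" and "H \<equiv> (u$3)" and "ir \<equiv> 1/r"
  shows "(s * H/3 + c * a) * (x$1) + s * (x$2) + ir * ((-c * H/3 + s * a) * (y$1) - c * (y$2)) + a * a = 0"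
    "(-c * a) * (x$1) + s * (x$2) + ir * ((-s * a) * (y$1) - c * (y$2)) - 2 * a * a = 0"
    "6 * s * a * (x$2) - c * a * (x$3) + s * (x$4) + ir * (-6 * c * a * (y$2) - s * a * (y$3) - c * (y$4)) - 4 * a * a * a - a * H * H = 0"
    "2 * c * a^2 * (x$1) + 2 * s * a * (x$2) + (-(2/3) * s * H - c * a) * (x$3) - s * (x$4) + ir * (2 * s * a^2 * (y$1) - 2 * c * a * (y$2) + ((2/3) * c * H - s * a) * (y$3) + c * (y$4)) - a * H * H = 0"
proof -
  have e: "\<And>k. (matA r phi u *v x + matB r phi u *v y + matC r phi u *v u) $ k = 0" using assms(1) by simp
  show "(s * H/3 + c * a) * (x$1) + s * (x$2) + ir * ((-c * H/3 + s * a) * (y$1) - c * (y$2)) + a * a = 0"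
    using e[of 1, unfolded matB_def ir_def[symmetric]] by (simp add: matA_def matC_def Let_def matrix_vector_mult_def sum_4 s_def c_def a_def H_def) (simp add: field_simps power2_eq_square)?
  show "(-c * a) * (x$1) + s * (x$2) + ir * ((-s * a) * (y$1) - c * (y$2)) - 2 * a * a = 0"
    using e[of 2, unfolded matB_def ir_def[symmetric]] by (simp add: matA_def matC_def Let_def matrix_vector_mult_def sum_4 s_def c_def a_def H_def) (simp add: field_simps power2_eq_square)?
  show "6 * s * a * (x$2) - c * a * (x$3) + s * (x$4) + ir * (-6 * c * a * (y$2) - s * a * (y$3) - c * (y$4)) - 4 * a * a * a - a * H * H = 0"
    using e[of 3, unfolded matB_def ir_def[symmetric]] by (simp add: matA_def matC_def Let_def matrix_vector_mult_def sum_4 s_def c_def a_def H_def) (simp add: field_simps power2_eq_square)?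
  show "2 * c * a^2 * (x$1) + 2 * s * a * (x$2) + (-(2/3) * s * H - c * a) * (x$3) - s * (x$4) + ir * (2 * s * a^2 * (y$1) - 2 * c * a * (y$2) + ((2/3) * c * H - s * a) * (y$3) + c * (y$4)) - a * H * H = 0"
    using e[of 4, unfolded matB_def ir_def[symmetric]] by (simp add: matA_def matC_def Let_def matrix_vector_mult_def sum_4 s_def c_def a_def H_def) (simp add: field_simps power2_eq_square)?
qed
lemma rowsE:
  fixes u x y :: "real^4"
  assumes A: "matA r phi u *v x + matB r phi u *v y + matC r phi u *v u = 0"
  defines "s \<equiv> sin (u$1 - phi)" and "c \<equiv> cos (u$1 - phi)" and "a \<equiv> u$2" and "H \<equiv> u$3" and "ir \<equiv> 1/r"
  shows "(s * H / 3 + 2 * c * a) * (x$1) + ir * (2 * s * a - c * H / 3) * (y$1) + 3 * a * a = 0"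
    "H / 3 * (s * (x$1) - ir * c * (y$1)) + 2 * (s * (x$2) - ir * c * (y$2)) - a * a = 0"
    "2 * a * H / 3 * (s * (x$1) - ir * c * (y$1)) + 6 * a * (s * (x$2) - ir * c * (y$2))
      + 2 * H / 3 * (s * (x$3) - ir * c * (y$3)) + 2 * (s * (x$4) - ir * c * (y$4)) - 2 * a * a * a = 0"
    "(s * H / 3 + c * a) * (5 * a * (x$1) + (x$3)) + ir * (s * a - c * H / 3) * (5 * a * (y$1) + (y$3)) + 9 * a * a * a + a * H * H = 0"
  unfolding s_def c_def a_def H_def ir_def
  using Ecomb[OF rows[OF A]] by auto

lemma det_factors:
  assumes "det (matA r phi u) \<noteq> 0"
  shows "sin (u$1 - phi) \<noteq> 0"
    "sin (u$1 - phi) * u$3 / 3 + 2 * cos (u$1 - phi) * u$2 \<noteq> 0"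
    "sin (u$1 - phi) * u$3 / 3 + cos (u$1 - phi) * u$2 \<noteq> 0"
proof -
  have "invertible (transpose (matA r phi u))" using assms by (simp add: invertible_det_nz)
  then have inj: "\<And>y. y v* matA r phi u = 0 \<Longrightarrow> y = 0"
    by (metis invertible_left_inverse matrix_left_invertible_ker transpose_matrix_vector)
  show "sin (u$1 - phi) \<noteq> 0"
  proof
    assume h: "sin (u$1 - phi) = 0"
    have "(vector [1, 1, 0, 0] :: real^4) v* matA r phi u = 0"
      using h by (simp add: vec_eq_iff forall_4 matA_def Let_def vector_matrix_mult_def sum_4)
    then have "(vector [1, 1, 0, 0] :: real^4) = 0" by (rule inj)
    then show False by (metis vector_4(1) zero_index zero_neq_one)
  qed
  show "sin (u$1 - phi) * u$3 / 3 + 2 * cos (u$1 - phi) * u$2 \<noteq> 0"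
  proof
    assume h: "sin (u$1 - phi) * u$3 / 3 + 2 * cos (u$1 - phi) * u$2 = 0"
    have "(vector [1, -1, 0, 0] :: real^4) v* matA r phi u = 0"
      using h by (simp add: vec_eq_iff forall_4 matA_def Let_def vector_matrix_mult_def sum_4 algebra_simps)
    then have "(vector [1, -1, 0, 0] :: real^4) = 0" by (rule inj)
    then show False by (metis vector_4(1) zero_index zero_neq_one)
  qed
  show "sin (u$1 - phi) * u$3 / 3 + cos (u$1 - phi) * u$2 \<noteq> 0"
  proof
    assume h: "sin (u$1 - phi) * u$3 / 3 + cos (u$1 - phi) * u$2 = 0"
    have "(vector [-10 * u$2, 2 * u$2, 1, 1] :: real^4) v* matA r phi u = 0"
      using h by (simp add: vec_eq_iff forall_4 matA_def Let_def vector_matrix_mult_def sum_4 algebra_simps power2_eq_square)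
    then have "(vector [-10 * u$2, 2 * u$2, 1, 1] :: real^4) = 0" by (rule inj)
    then show False by (metis vector_4(3) zero_index zero_neq_one)
  qed
qed

lemma bnd_list:
  fixes B :: "'a::topological_space set"
  assumes "compact B" "\<And>f. f \<in> set fs \<Longrightarrow> continuous_on B f"
  shows "\<exists>K::real. \<forall>f\<in>set fs. \<forall>p\<in>B. \<bar>f p\<bar> \<le> K"
  using assms(2)
proof (induction fs)
  case Nil
  then show ?case by auto
next
  case (Cons f fs)
  then obtain K where K: "\<forall>g\<in>set fs. \<forall>p\<in>B. \<bar>g p\<bar> \<le> K" by auto
  have "compact (f ` B)" using Cons.prems assms(1) by (intro compact_continuous_image) auto
  then obtain K1 where K1: "\<forall>x\<in>f ` B. norm x \<le> K1" using compact_imp_bounded bounded_iff by metis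
  show ?case
    by (rule exI[of _ "max K K1"]) (use K K1 in \<open>auto simp: le_max_iff_disj\<close>)
qed

lemma lin5:
  fixes a1 a2 a3 a4 a5 x1 x2 x3 x4 x5 K :: real
  assumes "\<bar>a1\<bar> \<le> K" "\<bar>a2\<bar> \<le> K" "\<bar>a3\<bar> \<le> K" "\<bar>a4\<bar> \<le> K" "\<bar>a5\<bar> \<le> K"
  shows "\<bar>a1 * x1 + a2 * x2 + a3 * x3 + a4 * x4 + a5 * x5\<bar> \<le> K * (\<bar>x1\<bar> + \<bar>x2\<bar> + \<bar>x3\<bar> + \<bar>x4\<bar> + \<bar>x5\<bar>)"
proof -
  have m: "\<bar>a * x\<bar> \<le> K * \<bar>x\<bar>" if "\<bar>a\<bar> \<le> K" for a x :: real
    using that by (simp add: abs_mult mult_right_mono)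
  have "\<bar>a1 * x1 + a2 * x2 + a3 * x3 + a4 * x4 + a5 * x5\<bar> \<le> \<bar>a1 * x1\<bar> + \<bar>a2 * x2\<bar> + \<bar>a3 * x3\<bar> + \<bar>a4 * x4\<bar> + \<bar>a5 * x5\<bar>"
    by linarith
  also have "\<dots> \<le> K * \<bar>x1\<bar> + K * \<bar>x2\<bar> + K * \<bar>x3\<bar> + K * \<bar>x4\<bar> + K * \<bar>x5\<bar>"
    using m assms by (meson add_mono)
  finally show ?thesis by (simp add: algebra_simps)
qed

lemma sin_lip: fixes x y :: real shows "\<bar>sin x - sin y\<bar> \<le> \<bar>x - y\<bar>"
proof -
  have "\<bar>sin x - sin y\<bar> = 2 * \<bar>sin ((x - y) / 2)\<bar> * \<bar>cos ((x + y) / 2)\<bar>"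
    by (simp add: sin_diff_sin abs_mult)
  also have "\<dots> \<le> 2 * \<bar>(x - y) / 2\<bar> * 1"
    by (intro mult_mono abs_sin_x_le_abs_x) auto
  finally show ?thesis by simp
qed

lemma cos_lip: fixes x y :: real shows "\<bar>cos x - cos y\<bar> \<le> \<bar>x - y\<bar>"
proof -
  have "\<bar>cos x - cos y\<bar> = 2 * \<bar>sin ((x + y) / 2)\<bar> * \<bar>sin ((y - x) / 2)\<bar>"
    by (simp add: cos_diff_cos abs_mult)
  also have "\<dots> \<le> 2 * 1 * \<bar>(y - x) / 2\<bar>"
    by (intro mult_mono abs_sin_x_le_abs_x) auto
  finally show ?thesis by simp
qed

lemma local_uniq:
  fixes U V :: "real \<times> real \<Rightarrow> real^4" and DU DV :: "real \<times> real \<Rightarrow> real \<times> real \<Rightarrow> real^4"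
  assumes oO: "open Om" and cO: "(c, \<phi>0) \<in> Om" and pos: "\<And>p. p \<in> Om \<Longrightarrow> fst p > 0"
    and dU: "\<And>p. p \<in> Om \<Longrightarrow> (U has_derivative DU p) (at p)" and cU: "\<And>h. continuous_on Om (\<lambda>p. DU p h)"
    and dV: "\<And>p. p \<in> Om \<Longrightarrow> (V has_derivative DV p) (at p)" and cV: "\<And>h. continuous_on Om (\<lambda>p. DV p h)"
    and eU: "\<And>p. p \<in> Om \<Longrightarrow> matA (fst p) (snd p) (U p) *v DU p (1,0) + matB (fst p) (snd p) (U p) *v DU p (0,1) + matC (fst p) (snd p) (U p) *v U p = 0"
    and eV: "\<And>p. p \<in> Om \<Longrightarrow> matA (fst p) (snd p) (V p) *v DV p (1,0) + matB (fst p) (snd p) (V p) *v DV p (0,1) + matC (fst p) (snd p) (V p) *v V p = 0"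
    and det: "det (matA c \<phi>0 (U (c, \<phi>0))) \<noteq> 0"
    and init: "\<And>\<phi>. (c, \<phi>) \<in> Om \<Longrightarrow> U (c, \<phi>) = V (c, \<phi>)"
  shows "\<exists>e>0. \<forall>p\<in>ball (c, \<phi>0) e. U p = V p"
proof -
  define u where "u k p = U p $ k" for k p
  define v where "v k p = V p $ k" for k p
  define ur where "ur k p = DU p (1,0) $ k" for k p
  define uf where "uf k p = DU p (0,1) $ k" for k p
  define vr where "vr k p = DV p (1,0) $ k" for k p
  define vf where "vf k p = DV p (0,1) $ k" for k p
  define sU where "sU p = sin (u 1 p - snd p)" for p
  define kU where "kU p = cos (u 1 p - snd p)" for p
  define sV where "sV p = sin (v 1 p - snd p)" for p
  define kV where "kV p = cos (v 1 p - snd p)" for p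
  define ir where "ir p = 1 / fst p" for p :: "real \<times> real"
  define w where "w k p = u k p - v k p" for k p
  define a1 where "a1 p = sU p * u 3 p / 3 + 2 * kU p * u 2 p" for p
  define b1 where "b1 p = ir p * (2 * sU p * u 2 p - kU p * u 3 p / 3)" for p
  define a4 where "a4 p = sU p * u 3 p / 3 + kU p * u 2 p" for p
  define b4 where "b4 p = ir p * (sU p * u 2 p - kU p * u 3 p / 3)" for p
  have EU: "(sU p * u 3 p / 3 + 2 * kU p * u 2 p) * ur 1 p + ir p * (2 * sU p * u 2 p - kU p * u 3 p / 3) * uf 1 p + 3 * u 2 p * u 2 p = 0"
    "u 3 p / 3 * (sU p * ur 1 p - ir p * kU p * uf 1 p) + 2 * (sU p * ur 2 p - ir p * kU p * uf 2 p) - u 2 p * u 2 p = 0"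
    "2 * u 2 p * u 3 p / 3 * (sU p * ur 1 p - ir p * kU p * uf 1 p) + 6 * u 2 p * (sU p * ur 2 p - ir p * kU p * uf 2 p)
      + 2 * u 3 p / 3 * (sU p * ur 3 p - ir p * kU p * uf 3 p) + 2 * (sU p * ur 4 p - ir p * kU p * uf 4 p) - 2 * u 2 p * u 2 p * u 2 p = 0"
    "(sU p * u 3 p / 3 + kU p * u 2 p) * (5 * u 2 p * ur 1 p + ur 3 p) + ir p * (sU p * u 2 p - kU p * u 3 p / 3) * (5 * u 2 p * uf 1 p + uf 3 p)
      + 9 * u 2 p * u 2 p * u 2 p + u 2 p * u 3 p * u 3 p = 0"
    if "p \<in> Om" for p
    using rowsE[OF eU[OF that]] unfolding u_def ur_def uf_def sU_def kU_def ir_def by auto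
  have EV: "(sV p * v 3 p / 3 + 2 * kV p * v 2 p) * vr 1 p + ir p * (2 * sV p * v 2 p - kV p * v 3 p / 3) * vf 1 p + 3 * v 2 p * v 2 p = 0"
    "v 3 p / 3 * (sV p * vr 1 p - ir p * kV p * vf 1 p) + 2 * (sV p * vr 2 p - ir p * kV p * vf 2 p) - v 2 p * v 2 p = 0"
    "2 * v 2 p * v 3 p / 3 * (sV p * vr 1 p - ir p * kV p * vf 1 p) + 6 * v 2 p * (sV p * vr 2 p - ir p * kV p * vf 2 p)
      + 2 * v 3 p / 3 * (sV p * vr 3 p - ir p * kV p * vf 3 p) + 2 * (sV p * vr 4 p - ir p * kV p * vf 4 p) - 2 * v 2 p * v 2 p * v 2 p = 0"
    "(sV p * v 3 p / 3 + kV p * v 2 p) * (5 * v 2 p * vr 1 p + vr 3 p) + ir p * (sV p * v 2 p - kV p * v 3 p / 3) * (5 * v 2 p * vf 1 p + vf 3 p)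
      + 9 * v 2 p * v 2 p * v 2 p + v 2 p * v 3 p * v 3 p = 0"
    if "p \<in> Om" for p
    using rowsE[OF eV[OF that]] unfolding v_def vr_def vf_def sV_def kV_def ir_def by auto
  have cu: "continuous_on Om (u k)" "continuous_on Om (v k)" for k
  proof -
    have "continuous_on Om U" using dU by (meson continuous_at_imp_continuous_on has_derivative_continuous)
    then show "continuous_on Om (u k)" unfolding u_def by (intro continuous_intros)
    have "continuous_on Om V" using dV by (meson continuous_at_imp_continuous_on has_derivative_continuous)
    then show "continuous_on Om (v k)" unfolding v_def by (intro continuous_intros)
  qed
  have cd: "continuous_on Om (ur k)" "continuous_on Om (uf k)" "continuous_on Om (vr k)" "continuous_on Om (vf k)" for k
    unfolding ur_def uf_def vr_def vf_def by (intro continuous_intros cU cV)+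
  have cir: "continuous_on Om ir" unfolding ir_def using pos
    by (intro continuous_intros) (use pos in force)
  have cs: "continuous_on Om sU" "continuous_on Om kU" "continuous_on Om sV" "continuous_on Om kV"
    unfolding sU_def kU_def sV_def kV_def by (intro continuous_intros cu)+
  have nd0: "sU (c, \<phi>0) \<noteq> 0" "a1 (c, \<phi>0) \<noteq> 0" "a4 (c, \<phi>0) \<noteq> 0"
    using det_factors[OF det] unfolding sU_def a1_def a4_def u_def kU_def sU_def by auto
  define g where "g p = sU p * a1 p * a4 p" for p
  have cg: "continuous_on Om g" unfolding g_def a1_def a4_def
    by (auto intro!: continuous_intros cs cu)
  have "open (Om \<inter> g -` (- {0}))" by (rule continuous_open_preimage[OF cg oO]) auto
  moreover have "(c, \<phi>0) \<in> Om \<inter> g -` (- {0})" using cO nd0 unfolding g_def by auto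
  ultimately obtain e0 where e0: "e0 > 0" "ball (c, \<phi>0) e0 \<subseteq> Om \<inter> g -` (- {0})"
    by (meson openE)
  define \<epsilon> where "\<epsilon> = e0 / 3"
  have \<epsilon>pos: "\<epsilon> > 0" using e0 \<epsilon>_def by simp
  define B where "B = {c - \<epsilon>..c + \<epsilon>} \<times> {\<phi>0 - \<epsilon>..\<phi>0 + \<epsilon>}"
  have cpB: "compact B" unfolding B_def by (intro compact_Times compact_Icc)
  have BO: "B \<subseteq> Om" and Bnz: "\<And>p. p \<in> B \<Longrightarrow> sU p \<noteq> 0 \<and> a1 p \<noteq> 0 \<and> a4 p \<noteq> 0"
  proof -
    have Bb: "B \<subseteq> ball (c, \<phi>0) e0"
    proof
      fix p assume "p \<in> B"
      then have "\<bar>fst p - c\<bar> \<le> \<epsilon>" "\<bar>snd p - \<phi>0\<bar> \<le> \<epsilon>" unfolding B_def by auto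
      moreover have "dist (c, \<phi>0) p \<le> \<bar>fst p - c\<bar> + \<bar>snd p - \<phi>0\<bar>"
      proof -
        have "dist (c, \<phi>0) p = sqrt ((fst p - c)\<^sup>2 + (snd p - \<phi>0)\<^sup>2)"
          by (cases p) (simp add: dist_Pair_Pair dist_real_def power2_commute)
        also have "\<dots> \<le> \<bar>fst p - c\<bar> + \<bar>snd p - \<phi>0\<bar>" by (rule sqrt_sum_squares_le_sum_abs)
        finally show ?thesis .
      qed
      ultimately show "p \<in> ball (c, \<phi>0) e0" using \<epsilon>_def e0 by simp
    qed
    then show "B \<subseteq> Om" using e0 by blast
    fix p assume "p \<in> B"
    then have "g p \<noteq> 0" using Bb e0 by blast
    then show "sU p \<noteq> 0 \<and> a1 p \<noteq> 0 \<and> a4 p \<noteq> 0" unfolding g_def by auto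
  qed
  define g00 where "g00 p = (0) / (a1 p)" for p
  define g01 where "g01 p = (- 3 * ((u 2 p) + (v 2 p)) - 2 * (kU p) * (vr 1 p) - 2 * (ir p) * (sU p) * (vf 1 p)) / (a1 p)" for p
  define g02 where "g02 p = (- (sU p) * (vr 1 p) / 3 + (ir p) * (kU p) * (vf 1 p) / 3) / (a1 p)" for p
  define g03 where "g03 p = (- (v 3 p) * (vr 1 p) / 3 - 2 * (ir p) * (v 2 p) * (vf 1 p)) / (a1 p)" for p
  define g04 where "g04 p = (- 2 * (v 2 p) * (vr 1 p) + (ir p) * (v 3 p) * (vf 1 p) / 3) / (a1 p)" for p
  define g10 where "g10 p = (((sU p) * (ur 3 p) - (ir p) * (kU p) * (uf 3 p)) / 3) / (sU p)" for p
  define g11 where "g11 p = (((u 2 p) + (v 2 p))) / (sU p)" for p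
  define g12 where "g12 p = (- ((sV p) * (vr 1 p) - (ir p) * (kV p) * (vf 1 p)) / 3) / (sU p)" for p
  define g13 where "g13 p = (- ((u 3 p) / 3) * (vr 1 p) - 2 * (vr 2 p)) / (sU p)" for p
  define g14 where "g14 p = ((ir p) * (u 3 p) / 3 * (vf 1 p) + 2 * (ir p) * (vf 2 p)) / (sU p)" for p
  define g20 where "g20 p = (2 * (((sU p) * (ur 2 p) - (ir p) * (kU p) * (uf 2 p)) * (u 3 p) + (u 2 p) * ((sU p) * (ur 3 p) - (ir p) * (kU p) * (uf 3 p))) / 3) / (sU p)" for p
  define g21 where "g21 p = (6 * ((sU p) * (ur 2 p) - (ir p) * (kU p) * (uf 2 p)) + 2 * ((u 2 p) * (u 2 p) + (u 2 p) * (v 2 p) + (v 2 p) * (v 2 p)) - 2 * (v 3 p) / 3 * ((sV p) * (vr 1 p) - (ir p) * (kV p) * (vf 1 p)) - 6 * ((sV p) * (vr 2 p) - (ir p) * (kV p) * (vf 2 p))) / (sU p)" for p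
  define g22 where "g22 p = (2 * ((sU p) * (ur 3 p) - (ir p) * (kU p) * (uf 3 p)) / 3 - 2 * (u 2 p) / 3 * ((sV p) * (vr 1 p) - (ir p) * (kV p) * (vf 1 p)) - 2 / 3 * ((sV p) * (vr 3 p) - (ir p) * (kV p) * (vf 3 p))) / (sU p)" for p
  define g23 where "g23 p = (- (2 * (u 2 p) * (u 3 p) / 3 * (vr 1 p) + 6 * (u 2 p) * (vr 2 p) + 2 * (u 3 p) / 3 * (vr 3 p) + 2 * (vr 4 p))) / (sU p)" for p
  define g24 where "g24 p = ((ir p) * (2 * (u 2 p) * (u 3 p) / 3 * (vf 1 p) + 6 * (u 2 p) * (vf 2 p) + 2 * (u 3 p) / 3 * (vf 3 p) + 2 * (vf 4 p))) / (sU p)" for p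
define g30 where "g30 p = (5 * ((a4 p) * (ur 2 p) + (b4 p) * (uf 2 p))) / (a4 p)" for p
  define g31 where "g31 p = (- 9 * ((u 2 p) * (u 2 p) + (u 2 p) * (v 2 p) + (v 2 p) * (v 2 p)) - (u 3 p) * (u 3 p) - (kU p) * (5 * (v 2 p) * (vr 1 p) + (vr 3 p)) - (ir p) * (sU p) * (5 * (v 2 p) * (vf 1 p) + (vf 3 p)) - 5 * ((a4 p) * (vr 1 p) + (b4 p) * (vf 1 p))) / (a4 p)" for p
  define g32 where "g32 p = (- (v 2 p) * ((u 3 p) + (v 3 p)) - (sU p) * (5 * (v 2 p) * (vr 1 p) + (vr 3 p)) / 3 + (ir p) * (kU p) * (5 * (v 2 p) * (vf 1 p) + (vf 3 p)) / 3) / (a4 p)" for p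
  define g33 where "g33 p = (- (v 3 p) * (5 * (v 2 p) * (vr 1 p) + (vr 3 p)) / 3 - (ir p) * (v 2 p) * (5 * (v 2 p) * (vf 1 p) + (vf 3 p))) / (a4 p)" for p
  define g34 where "g34 p = (- (v 2 p) * (5 * (v 2 p) * (vr 1 p) + (vr 3 p)) + (ir p) * (v 3 p) * (5 * (v 2 p) * (vf 1 p) + (vf 3 p)) / 3) / (a4 p)" for p

  have pB: "p \<in> Om" if "p \<in> B" for p using that BO by blast
  define q where "q (i::nat) p = (if i = 0 then w 1 p else if i = 1 then u 3 p / 3 * w 1 p + 2 * w 2 p
     else if i = 2 then 2 * u 2 p * u 3 p / 3 * w 1 p + 6 * u 2 p * w 2 p + 2 * u 3 p / 3 * w 3 p + 2 * w 4 p
     else 5 * u 2 p * w 1 p + w 3 p)" for i p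
  define Dq where "Dq (i::nat) p h = (if i = 0 then DU p h $ 1 - DV p h $ 1
     else if i = 1 then DU p h $ 3 / 3 * w 1 p + u 3 p / 3 * (DU p h $ 1 - DV p h $ 1) + 2 * (DU p h $ 2 - DV p h $ 2)
     else if i = 2 then 2 * (DU p h $ 2 * u 3 p + u 2 p * DU p h $ 3) / 3 * w 1 p + 2 * u 2 p * u 3 p / 3 * (DU p h $ 1 - DV p h $ 1)
        + 6 * DU p h $ 2 * w 2 p + 6 * u 2 p * (DU p h $ 2 - DV p h $ 2) + 2 * DU p h $ 3 / 3 * w 3 p
        + 2 * u 3 p / 3 * (DU p h $ 3 - DV p h $ 3) + 2 * (DU p h $ 4 - DV p h $ 4)
     else 5 * DU p h $ 2 * w 1 p + 5 * u 2 p * (DU p h $ 1 - DV p h $ 1) + (DU p h $ 3 - DV p h $ 3))" for i p h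
  define \<beta> where "\<beta> (i::nat) p = (if i = 0 then b1 p / a1 p else if i = 3 then b4 p / a4 p else - ir p * kU p / sU p)" for i p
  have i4: "i = 0 \<or> i = 1 \<or> i = 2 \<or> i = 3" if "i < (4::nat)" for i using that by auto
  have duk: "(u k has_derivative (\<lambda>h. DU p h $ k)) (at p)" "(v k has_derivative (\<lambda>h. DV p h $ k)) (at p)"
    if "p \<in> Om" for k p
  proof -
    have "u k = (\<lambda>p. U p $ k)" "v k = (\<lambda>p. V p $ k)" by (auto simp: u_def v_def)
    then show "(u k has_derivative (\<lambda>h. DU p h $ k)) (at p)" "(v k has_derivative (\<lambda>h. DV p h $ k)) (at p)"
      using bounded_linear.has_derivative[OF bounded_linear_vec_nth dU[OF that]]
        bounded_linear.has_derivative[OF bounded_linear_vec_nth dV[OF that]] by auto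
  qed
  have der: "(q i has_derivative Dq i p) (at p)" if iH: "i < 4" and pH: "p \<in> Om" for i p
  proof -
    note d = duk[OF pH]
    have wf: "w k = (\<lambda>p. u k p - v k p)" for k by (auto simp: w_def)
    consider "i = 0" | "i = 1" | "i = 2" | "i = 3" using i4[OF iH] by blast
    then show ?thesis
    proof cases
      case 1
      have e: "q i = (\<lambda>p. u 1 p - v 1 p)" "Dq i p = (\<lambda>h. DU p h $ 1 - DV p h $ 1)"
        using 1 by (auto simp: q_def Dq_def w_def)
      show ?thesis unfolding e by (auto intro!: derivative_eq_intros d)
    next
      case 2
      have e: "q i = (\<lambda>p. u 3 p / 3 * (u 1 p - v 1 p) + 2 * (u 2 p - v 2 p))"
        "Dq i p = (\<lambda>h. DU p h $ 3 / 3 * (u 1 p - v 1 p) + u 3 p / 3 * (DU p h $ 1 - DV p h $ 1) + 2 * (DU p h $ 2 - DV p h $ 2))"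
        using 2 by (auto simp: q_def Dq_def w_def)
      show ?thesis unfolding e by (auto intro!: derivative_eq_intros d simp: fun_eq_iff field_simps)
    next
      case 3
      have e: "q i = (\<lambda>p. 2 * u 2 p * u 3 p / 3 * (u 1 p - v 1 p) + 6 * u 2 p * (u 2 p - v 2 p) + 2 * u 3 p / 3 * (u 3 p - v 3 p) + 2 * (u 4 p - v 4 p))"
        "Dq i p = (\<lambda>h. 2 * (DU p h $ 2 * u 3 p + u 2 p * DU p h $ 3) / 3 * (u 1 p - v 1 p) + 2 * u 2 p * u 3 p / 3 * (DU p h $ 1 - DV p h $ 1)
        + 6 * DU p h $ 2 * (u 2 p - v 2 p) + 6 * u 2 p * (DU p h $ 2 - DV p h $ 2) + 2 * DU p h $ 3 / 3 * (u 3 p - v 3 p)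
        + 2 * u 3 p / 3 * (DU p h $ 3 - DV p h $ 3) + 2 * (DU p h $ 4 - DV p h $ 4))"
        using 3 by (auto simp: q_def Dq_def w_def)
      show ?thesis unfolding e by (auto intro!: derivative_eq_intros d simp: fun_eq_iff field_simps)
    next
      case 4
      have e: "q i = (\<lambda>p. 5 * u 2 p * (u 1 p - v 1 p) + (u 3 p - v 3 p))"
        "Dq i p = (\<lambda>h. 5 * DU p h $ 2 * (u 1 p - v 1 p) + 5 * u 2 p * (DU p h $ 1 - DV p h $ 1) + (DU p h $ 3 - DV p h $ 3))"
        using 4 by (auto simp: q_def Dq_def w_def)
      show ?thesis unfolding e by (auto intro!: derivative_eq_intros d simp: fun_eq_iff field_simps)
    qed
  qed
  have linq: "Dq i p (1, b) = Dq i p (1, 0) + b * Dq i p (0, 1)" if "i < 4" "p \<in> Om" for i p b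
  proof -
    have l: "linear (Dq i p)" using der[OF that] has_derivative_linear by blast
    have "(1::real, b) = (1, 0) + b *\<^sub>R (0, 1)" by simp
    then show ?thesis using linear_add[OF l] linear_cmul[OF l] by (metis real_scaleR_def)
  qed
  have Xr: "Dq 0 p (1,0) = ur 1 p - vr 1 p" "Dq 0 p (0,1) = uf 1 p - vf 1 p"
    "Dq 1 p (1,0) = ur 3 p / 3 * (u 1 p - v 1 p) + u 3 p / 3 * (ur 1 p - vr 1 p) + 2 * (ur 2 p - vr 2 p)"
    "Dq 1 p (0,1) = uf 3 p / 3 * (u 1 p - v 1 p) + u 3 p / 3 * (uf 1 p - vf 1 p) + 2 * (uf 2 p - vf 2 p)"
    "Dq 2 p (1,0) = 2 * (ur 2 p * u 3 p + u 2 p * ur 3 p) / 3 * (u 1 p - v 1 p) + 2 * u 2 p * u 3 p / 3 * (ur 1 p - vr 1 p) + 6 * ur 2 p * (u 2 p - v 2 p)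
          + 6 * u 2 p * (ur 2 p - vr 2 p) + 2 * ur 3 p / 3 * (u 3 p - v 3 p) + 2 * u 3 p / 3 * (ur 3 p - vr 3 p) + 2 * (ur 4 p - vr 4 p)"
    "Dq 2 p (0,1) = 2 * (uf 2 p * u 3 p + u 2 p * uf 3 p) / 3 * (u 1 p - v 1 p) + 2 * u 2 p * u 3 p / 3 * (uf 1 p - vf 1 p) + 6 * uf 2 p * (u 2 p - v 2 p)
          + 6 * u 2 p * (uf 2 p - vf 2 p) + 2 * uf 3 p / 3 * (u 3 p - v 3 p) + 2 * u 3 p / 3 * (uf 3 p - vf 3 p) + 2 * (uf 4 p - vf 4 p)"
    "Dq 3 p (1,0) = 5 * ur 2 p * (u 1 p - v 1 p) + 5 * u 2 p * (ur 1 p - vr 1 p) + (ur 3 p - vr 3 p)"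
    "Dq 3 p (0,1) = 5 * uf 2 p * (u 1 p - v 1 p) + 5 * u 2 p * (uf 1 p - vf 1 p) + (uf 3 p - vf 3 p)"
    for p
    unfolding Dq_def ur_def uf_def vr_def vf_def w_def by simp_all
  have key0: "Dq 0 p (1, \<beta> 0 p) = g00 p * w 1 p + g01 p * w 2 p + g02 p * w 3 p + g03 p * (sU p - sV p) + g04 p * (kU p - kV p)" if pB': "p \<in> B" for p
  proof -
    have pO: "p \<in> Om" using pB' BO by blast
    have nz: "a1 p \<noteq> 0" using Bnz[OF pB'] by auto
    note I = id1[OF EU(1)[OF pO] EV(1)[OF pO], folded a1_def b1_def]
    have l: "Dq 0 p (1, \<beta> 0 p) = Dq 0 p (1,0) + \<beta> 0 p * Dq 0 p (0,1)"
      by (rule linq) (use pO in auto)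
    have "Dq 0 p (1, \<beta> 0 p) = (a1 p * Dq 0 p (1,0) + b1 p * Dq 0 p (0,1)) / a1 p"
      unfolding l using nz by (simp add: \<beta>_def field_simps)
    also have "\<dots> = g00 p * w 1 p + g01 p * w 2 p + g02 p * w 3 p + g03 p * (sU p - sV p) + g04 p * (kU p - kV p)"
      unfolding Xr I g00_def g01_def g02_def g03_def g04_def w_def using nz by (simp add: field_simps)
    finally show ?thesis .
  qed
  have key1: "Dq 1 p (1, \<beta> 1 p) = g10 p * w 1 p + g11 p * w 2 p + g12 p * w 3 p + g13 p * (sU p - sV p) + g14 p * (kU p - kV p)" if pB': "p \<in> B" for p
  proof -
    have pO: "p \<in> Om" using pB' BO by blast
    have nz: "sU p \<noteq> 0" using Bnz[OF pB'] by auto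
    note I = id2[where t="u 1 p" and t'="v 1 p" and ?r3.0="ur 3 p" and ?f3.0="uf 3 p", OF EU(2)[OF pO] EV(2)[OF pO]]
    have l: "Dq 1 p (1, \<beta> 1 p) = Dq 1 p (1,0) + \<beta> 1 p * Dq 1 p (0,1)"
      by (rule linq) (use pO in auto)
    have "Dq 1 p (1, \<beta> 1 p) = (sU p * Dq 1 p (1,0) + (- ir p * kU p) * Dq 1 p (0,1)) / sU p"
      unfolding l using nz by (simp add: \<beta>_def field_simps)
    also have "\<dots> = g10 p * w 1 p + g11 p * w 2 p + g12 p * w 3 p + g13 p * (sU p - sV p) + g14 p * (kU p - kV p)"
      unfolding Xr I g10_def g11_def g12_def g13_def g14_def w_def using nz by (simp add: field_simps)
    finally show ?thesis .
  qed
  have key2: "Dq 2 p (1, \<beta> 2 p) = g20 p * w 1 p + g21 p * w 2 p + g22 p * w 3 p + g23 p * (sU p - sV p) + g24 p * (kU p - kV p)" if pB': "p \<in> B" for p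
  proof -
    have pO: "p \<in> Om" using pB' BO by blast
    have nz: "sU p \<noteq> 0" using Bnz[OF pB'] by auto
    note I = id3[where t="u 1 p" and t'="v 1 p", OF EU(3)[OF pO] EV(3)[OF pO]]
    have l: "Dq 2 p (1, \<beta> 2 p) = Dq 2 p (1,0) + \<beta> 2 p * Dq 2 p (0,1)"
      by (rule linq) (use pO in auto)
    have "Dq 2 p (1, \<beta> 2 p) = (sU p * Dq 2 p (1,0) + (- ir p * kU p) * Dq 2 p (0,1)) / sU p"
      unfolding l using nz by (simp add: \<beta>_def field_simps)
    also have "\<dots> = g20 p * w 1 p + g21 p * w 2 p + g22 p * w 3 p + g23 p * (sU p - sV p) + g24 p * (kU p - kV p)"
      unfolding Xr I g20_def g21_def g22_def g23_def g24_def w_def using nz by (simp add: field_simps)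
    finally show ?thesis .
  qed
  have key3: "Dq 3 p (1, \<beta> 3 p) = g30 p * w 1 p + g31 p * w 2 p + g32 p * w 3 p + g33 p * (sU p - sV p) + g34 p * (kU p - kV p)" if pB': "p \<in> B" for p
  proof -
    have pO: "p \<in> Om" using pB' BO by blast
    have nz: "a4 p \<noteq> 0" using Bnz[OF pB'] by auto
    have nz': "sU p * u 3 p / 3 + kU p * u 2 p \<noteq> 0" using nz unfolding a4_def .
    note I = id4[where t="u 1 p" and t'="v 1 p" and ?r2.0="ur 2 p" and ?f2.0="uf 2 p", OF EU(4)[OF pO] EV(4)[OF pO], folded a4_def b4_def]
    have l: "Dq 3 p (1, \<beta> 3 p) = Dq 3 p (1,0) + \<beta> 3 p * Dq 3 p (0,1)"
      by (rule linq) (use pO in auto)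
    have "Dq 3 p (1, \<beta> 3 p) = (a4 p * Dq 3 p (1,0) + b4 p * Dq 3 p (0,1)) / a4 p"
      unfolding l using nz by (simp add: \<beta>_def field_simps)
    also have "\<dots> = g30 p * w 1 p + g31 p * w 2 p + g32 p * w 3 p + g33 p * (sU p - sV p) + g34 p * (kU p - kV p)"
      unfolding Xr I g30_def g31_def g32_def g33_def g34_def w_def using nz by (simp add: field_simps)
    finally show ?thesis .
  qed
  have cB: "continuous_on B (u k)" "continuous_on B (v k)" "continuous_on B (ur k)" "continuous_on B (uf k)"
     "continuous_on B (vr k)" "continuous_on B (vf k)" for k
    using cu cd BO continuous_on_subset by metis+
  have cB2: "continuous_on B sU" "continuous_on B kU" "continuous_on B sV" "continuous_on B kV" "continuous_on B ir"
    using cs cir BO continuous_on_subset by metis+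
  have nzB: "\<forall>p\<in>B. sU p \<noteq> 0" "\<forall>p\<in>B. a1 p \<noteq> 0" "\<forall>p\<in>B. a4 p \<noteq> 0" using Bnz by auto
  have a1e: "a1 = (\<lambda>p. sU p * u 3 p / 3 + 2 * kU p * u 2 p)" by (rule ext) (rule a1_def)
  have b1e: "b1 = (\<lambda>p. ir p * (2 * sU p * u 2 p - kU p * u 3 p / 3))" by (rule ext) (rule b1_def)
  have a4e: "a4 = (\<lambda>p. sU p * u 3 p / 3 + kU p * u 2 p)" by (rule ext) (rule a4_def)
  have b4e: "b4 = (\<lambda>p. ir p * (sU p * u 2 p - kU p * u 3 p / 3))" by (rule ext) (rule b4_def)
  have cA: "continuous_on B a1" "continuous_on B b1" "continuous_on B a4" "continuous_on B b4"
    unfolding a1e b1e a4e b4e by (auto intro!: continuous_intros cB cB2)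
  have \<beta>e: "\<beta> 0 = (\<lambda>p. b1 p / a1 p)" "\<beta> 1 = (\<lambda>p. - ir p * kU p / sU p)" "\<beta> 2 = (\<lambda>p. - ir p * kU p / sU p)"
    "\<beta> 3 = (\<lambda>p. b4 p / a4 p)" by (auto simp: \<beta>_def)
  have cg00: "continuous_on B g00"
  proof -
    have e: "g00 = (\<lambda>p. (0) / (a1 p))" by (rule ext) (rule g00_def)
    show ?thesis unfolding e by (auto intro!: continuous_intros cB cB2 cA simp: nzB)
  qed
  have cg01: "continuous_on B g01"
  proof -
    have e: "g01 = (\<lambda>p. (- 3 * ((u 2 p) + (v 2 p)) - 2 * (kU p) * (vr 1 p) - 2 * (ir p) * (sU p) * (vf 1 p)) / (a1 p))" by (rule ext) (rule g01_def)
    show ?thesis unfolding e by (auto intro!: continuous_intros cB cB2 cA simp: nzB)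
  qed
  have cg02: "continuous_on B g02"
  proof -
    have e: "g02 = (\<lambda>p. (- (sU p) * (vr 1 p) / 3 + (ir p) * (kU p) * (vf 1 p) / 3) / (a1 p))" by (rule ext) (rule g02_def)
    show ?thesis unfolding e by (auto intro!: continuous_intros cB cB2 cA simp: nzB)
  qed
  have cg03: "continuous_on B g03"
  proof -
    have e: "g03 = (\<lambda>p. (- (v 3 p) * (vr 1 p) / 3 - 2 * (ir p) * (v 2 p) * (vf 1 p)) / (a1 p))" by (rule ext) (rule g03_def)
    show ?thesis unfolding e by (auto intro!: continuous_intros cB cB2 cA simp: nzB)
  qed
  have cg04: "continuous_on B g04"
  proof -
    have e: "g04 = (\<lambda>p. (- 2 * (v 2 p) * (vr 1 p) + (ir p) * (v 3 p) * (vf 1 p) / 3) / (a1 p))" by (rule ext) (rule g04_def)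
    show ?thesis unfolding e by (auto intro!: continuous_intros cB cB2 cA simp: nzB)
  qed
  have cg10: "continuous_on B g10"
  proof -
    have e: "g10 = (\<lambda>p. (((sU p) * (ur 3 p) - (ir p) * (kU p) * (uf 3 p)) / 3) / (sU p))" by (rule ext) (rule g10_def)
    show ?thesis unfolding e by (auto intro!: continuous_intros cB cB2 cA simp: nzB)
  qed
  have cg11: "continuous_on B g11"
  proof -
    have e: "g11 = (\<lambda>p. (((u 2 p) + (v 2 p))) / (sU p))" by (rule ext) (rule g11_def)
    show ?thesis unfolding e by (auto intro!: continuous_intros cB cB2 cA simp: nzB)
  qed
  have cg12: "continuous_on B g12"
  proof -
    have e: "g12 = (\<lambda>p. (- ((sV p) * (vr 1 p) - (ir p) * (kV p) * (vf 1 p)) / 3) / (sU p))" by (rule ext) (rule g12_def)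
    show ?thesis unfolding e by (auto intro!: continuous_intros cB cB2 cA simp: nzB)
  qed
  have cg13: "continuous_on B g13"
  proof -
    have e: "g13 = (\<lambda>p. (- ((u 3 p) / 3) * (vr 1 p) - 2 * (vr 2 p)) / (sU p))" by (rule ext) (rule g13_def)
    show ?thesis unfolding e by (auto intro!: continuous_intros cB cB2 cA simp: nzB)
  qed
  have cg14: "continuous_on B g14"
  proof -
    have e: "g14 = (\<lambda>p. ((ir p) * (u 3 p) / 3 * (vf 1 p) + 2 * (ir p) * (vf 2 p)) / (sU p))" by (rule ext) (rule g14_def)
    show ?thesis unfolding e by (auto intro!: continuous_intros cB cB2 cA simp: nzB)
  qed
  have cg20: "continuous_on B g20"
  proof -
    have e: "g20 = (\<lambda>p. (2 * (((sU p) * (ur 2 p) - (ir p) * (kU p) * (uf 2 p)) * (u 3 p) + (u 2 p) * ((sU p) * (ur 3 p) - (ir p) * (kU p) * (uf 3 p))) / 3) / (sU p))" by (rule ext) (rule g20_def)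
    show ?thesis unfolding e by (auto intro!: continuous_intros cB cB2 cA simp: nzB)
  qed
  have cg21: "continuous_on B g21"
  proof -
    have e: "g21 = (\<lambda>p. (6 * ((sU p) * (ur 2 p) - (ir p) * (kU p) * (uf 2 p)) + 2 * ((u 2 p) * (u 2 p) + (u 2 p) * (v 2 p) + (v 2 p) * (v 2 p)) - 2 * (v 3 p) / 3 * ((sV p) * (vr 1 p) - (ir p) * (kV p) * (vf 1 p)) - 6 * ((sV p) * (vr 2 p) - (ir p) * (kV p) * (vf 2 p))) / (sU p))" by (rule ext) (rule g21_def)
    show ?thesis unfolding e by (auto intro!: continuous_intros cB cB2 cA simp: nzB)
  qed
  have cg22: "continuous_on B g22"
  proof -
    have e: "g22 = (\<lambda>p. (2 * ((sU p) * (ur 3 p) - (ir p) * (kU p) * (uf 3 p)) / 3 - 2 * (u 2 p) / 3 * ((sV p) * (vr 1 p) - (ir p) * (kV p) * (vf 1 p)) - 2 / 3 * ((sV p) * (vr 3 p) - (ir p) * (kV p) * (vf 3 p))) / (sU p))" by (rule ext) (rule g22_def)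
    show ?thesis unfolding e by (auto intro!: continuous_intros cB cB2 cA simp: nzB)
  qed
  have cg23: "continuous_on B g23"
  proof -
    have e: "g23 = (\<lambda>p. (- (2 * (u 2 p) * (u 3 p) / 3 * (vr 1 p) + 6 * (u 2 p) * (vr 2 p) + 2 * (u 3 p) / 3 * (vr 3 p) + 2 * (vr 4 p))) / (sU p))" by (rule ext) (rule g23_def)
    show ?thesis unfolding e by (auto intro!: continuous_intros cB cB2 cA simp: nzB)
  qed
  have cg24: "continuous_on B g24"
  proof -
    have e: "g24 = (\<lambda>p. ((ir p) * (2 * (u 2 p) * (u 3 p) / 3 * (vf 1 p) + 6 * (u 2 p) * (vf 2 p) + 2 * (u 3 p) / 3 * (vf 3 p) + 2 * (vf 4 p))) / (sU p))" by (rule ext) (rule g24_def)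
    show ?thesis unfolding e by (auto intro!: continuous_intros cB cB2 cA simp: nzB)
  qed
  have cg30: "continuous_on B g30"
  proof -
    have e: "g30 = (\<lambda>p. (5 * ((a4 p) * (ur 2 p) + (b4 p) * (uf 2 p))) / (a4 p))" by (rule ext) (rule g30_def)
    show ?thesis unfolding e by (auto intro!: continuous_intros cB cB2 cA simp: nzB)
  qed
  have cg31: "continuous_on B g31"
  proof -
    have e: "g31 = (\<lambda>p. (- 9 * ((u 2 p) * (u 2 p) + (u 2 p) * (v 2 p) + (v 2 p) * (v 2 p)) - (u 3 p) * (u 3 p) - (kU p) * (5 * (v 2 p) * (vr 1 p) + (vr 3 p)) - (ir p) * (sU p) * (5 * (v 2 p) * (vf 1 p) + (vf 3 p)) - 5 * ((a4 p) * (vr 1 p) + (b4 p) * (vf 1 p))) / (a4 p))" by (rule ext) (rule g31_def)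
    show ?thesis unfolding e by (auto intro!: continuous_intros cB cB2 cA simp: nzB)
  qed
  have cg32: "continuous_on B g32"
  proof -
    have e: "g32 = (\<lambda>p. (- (v 2 p) * ((u 3 p) + (v 3 p)) - (sU p) * (5 * (v 2 p) * (vr 1 p) + (vr 3 p)) / 3 + (ir p) * (kU p) * (5 * (v 2 p) * (vf 1 p) + (vf 3 p)) / 3) / (a4 p))" by (rule ext) (rule g32_def)
    show ?thesis unfolding e by (auto intro!: continuous_intros cB cB2 cA simp: nzB)
  qed
  have cg33: "continuous_on B g33"
  proof -
    have e: "g33 = (\<lambda>p. (- (v 3 p) * (5 * (v 2 p) * (vr 1 p) + (vr 3 p)) / 3 - (ir p) * (v 2 p) * (5 * (v 2 p) * (vf 1 p) + (vf 3 p))) / (a4 p))" by (rule ext) (rule g33_def)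
    show ?thesis unfolding e by (auto intro!: continuous_intros cB cB2 cA simp: nzB)
  qed
  have cg34: "continuous_on B g34"
  proof -
    have e: "g34 = (\<lambda>p. (- (v 2 p) * (5 * (v 2 p) * (vr 1 p) + (vr 3 p)) + (ir p) * (v 3 p) * (5 * (v 2 p) * (vf 1 p) + (vf 3 p)) / 3) / (a4 p))" by (rule ext) (rule g34_def)
    show ?thesis unfolding e by (auto intro!: continuous_intros cB cB2 cA simp: nzB)
  qed
  define fl where "fl = [\<beta> 0, \<beta> 1, \<beta> 3, g00, g01, g02, g03, g04, g10, g11, g12, g13, g14, g20, g21, g22, g23, g24, g30, g31, g32, g33, g34,
     (\<lambda>p. 1), (\<lambda>p. 1/2), (\<lambda>p. - u 3 p / 6), (\<lambda>p. -5 * u 2 p), (\<lambda>p. 11/6 * u 2 p * u 3 p),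
     (\<lambda>p. - 3/2 * u 2 p), (\<lambda>p. - u 3 p / 3)]"
  have "\<forall>f\<in>set fl. continuous_on B f"
  proof -
    have "continuous_on B (\<beta> 0)" "continuous_on B (\<beta> 1)" "continuous_on B (\<beta> 3)"
      unfolding \<beta>e by (auto intro!: continuous_intros cB cB2 cA simp: nzB)
    moreover have "continuous_on B (\<lambda>p. 1::real)" "continuous_on B (\<lambda>p. 1/2::real)" "continuous_on B (\<lambda>p. - u 3 p / 6)"
      "continuous_on B (\<lambda>p. -5 * u 2 p)" "continuous_on B (\<lambda>p. 11/6 * u 2 p * u 3 p)" "continuous_on B (\<lambda>p. - 3/2 * u 2 p)"
      "continuous_on B (\<lambda>p. - u 3 p / 3)"
      by (auto intro!: continuous_intros cB)
    ultimately show ?thesis unfolding fl_def using cg00 cg01 cg02 cg03 cg04 cg10 cg11 cg12 cg13 cg14 cg20 cg21 cg22 cg23 cg24 cg30 cg31 cg32 cg33 cg34 by auto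
  qed
  then obtain K0 where K0: "\<forall>f\<in>set fl. \<forall>p\<in>B. \<bar>f p\<bar> \<le> K0"
    using bnd_list[OF cpB] by blast
  have cB0: "(c, \<phi>0) \<in> B" unfolding B_def using \<epsilon>pos by auto
  have K01: "K0 \<ge> 1" using K0 cB0 unfolding fl_def by force
  have bnds: "\<forall>p\<in>B. \<bar>f p\<bar> \<le> K0" if "f \<in> set fl" for f using K0 that by blast
  have gb: "\<bar>g p\<bar> \<le> K0" if "g \<in> {g00, g01, g02, g03, g04, g10, g11, g12, g13, g14, g20, g21, g22, g23, g24, g30, g31, g32, g33, g34}" "p \<in> B" for g p
    using bnds[of g] that unfolding fl_def by auto
  have \<beta>b: "\<bar>\<beta> i p\<bar> \<le> K0" if "i < 4" "p \<in> B" for i p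
  proof -
    have "\<beta> 2 = \<beta> 1" using \<beta>e by simp
    then show ?thesis using bnds[of "\<beta> 0"] bnds[of "\<beta> 1"] bnds[of "\<beta> 3"] that i4[OF that(1)]
      unfolding fl_def by auto
  qed
  have sum4: "(\<Sum>j<4. f j) = f 0 + f 1 + f 2 + f (3::nat)" for f :: "nat \<Rightarrow> real"
    by (simp add: numeral_eq_Suc)
  have winv: "w 1 p = 1 * q 0 p + 0 * q 1 p + 0 * q 2 p + 0 * q 3 p + 0 * 0"
     "w 2 p = (- u 3 p / 6) * q 0 p + (1/2) * q 1 p + 0 * q 2 p + 0 * q 3 p + 0 * 0"
     "w 3 p = (-5 * u 2 p) * q 0 p + 0 * q 1 p + 0 * q 2 p + 1 * q 3 p + 0 * 0"
     "w 4 p = (11/6 * u 2 p * u 3 p) * q 0 p + (- 3/2 * u 2 p) * q 1 p + (1/2) * q 2 p + (- u 3 p / 3) * q 3 p + 0 * 0" for p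
    by (simp_all add: q_def field_simps)
  have wsum: "\<bar>w 1 p\<bar> + \<bar>w 2 p\<bar> + \<bar>w 3 p\<bar> + \<bar>w 4 p\<bar> \<le> 4 * K0 * (\<Sum>j<4. \<bar>q j p\<bar>)" if pB': "p \<in> B" for p
  proof -
    have c: "\<bar>(1::real)\<bar> \<le> K0" "\<bar>1/2::real\<bar> \<le> K0" "\<bar>- u 3 p / 6\<bar> \<le> K0" "\<bar>-5 * u 2 p\<bar> \<le> K0"
      "\<bar>11/6 * u 2 p * u 3 p\<bar> \<le> K0" "\<bar>- 3/2 * u 2 p\<bar> \<le> K0" "\<bar>- u 3 p / 3\<bar> \<le> K0" "\<bar>0::real\<bar> \<le> K0"
      using K0 pB' K01 unfolding fl_def by auto
    let ?S = "\<bar>q 0 p\<bar> + \<bar>q 1 p\<bar> + \<bar>q 2 p\<bar> + \<bar>q 3 p\<bar> + \<bar>0\<bar>"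
    have "\<bar>w 1 p\<bar> \<le> K0 * ?S" unfolding winv(1) by (rule lin5) (use c in auto)
    moreover have "\<bar>w 2 p\<bar> \<le> K0 * ?S" unfolding winv(2) by (rule lin5) (use c in auto)
    moreover have "\<bar>w 3 p\<bar> \<le> K0 * ?S" unfolding winv(3) by (rule lin5) (use c in auto)
    moreover have "\<bar>w 4 p\<bar> \<le> K0 * ?S" unfolding winv(4) by (rule lin5) (use c in auto)
    ultimately show ?thesis unfolding sum4 by simp
  qed
  have dsb: "\<bar>sU p - sV p\<bar> \<le> \<bar>w 1 p\<bar>" "\<bar>kU p - kV p\<bar> \<le> \<bar>w 1 p\<bar>" for p
    using sin_lip[of "u 1 p - snd p" "v 1 p - snd p"] cos_lip[of "u 1 p - snd p" "v 1 p - snd p"]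
    unfolding sU_def sV_def kU_def kV_def w_def by simp_all
  have dqb0: "\<bar>Dq i p (1, \<beta> i p)\<bar> \<le> K0 * (\<bar>w 1 p\<bar> + \<bar>w 2 p\<bar> + \<bar>w 3 p\<bar> + \<bar>sU p - sV p\<bar> + \<bar>kU p - kV p\<bar>)"
    if iH: "i < 4" and pB': "p \<in> B" for i p
  proof -
    consider "i = 0" | "i = 1" | "i = 2" | "i = 3" using i4[OF iH] by blast
    then show ?thesis
    proof cases
      case 1 show ?thesis unfolding 1 key0[OF pB'] by (intro lin5) (use gb pB' in auto)
    next
      case 2 show ?thesis unfolding 2 key1[OF pB'] by (intro lin5) (use gb pB' in auto)
    next
      case 3 show ?thesis unfolding 3 key2[OF pB'] by (intro lin5) (use gb pB' in auto)
    next
      case 4 show ?thesis unfolding 4 key3[OF pB'] by (intro lin5) (use gb pB' in auto)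
    qed
  qed
  have dqb: "\<bar>Dq i p (1, \<beta> i p)\<bar> \<le> (12 * K0 * K0) * (\<Sum>j<4. \<bar>q j p\<bar>)" if iH: "i < 4" and pB': "p \<in> B" for i p
  proof -
    have "\<bar>Dq i p (1, \<beta> i p)\<bar> \<le> K0 * (\<bar>w 1 p\<bar> + \<bar>w 2 p\<bar> + \<bar>w 3 p\<bar> + \<bar>sU p - sV p\<bar> + \<bar>kU p - kV p\<bar>)"
      by (rule dqb0[OF iH pB'])
    also have "\<dots> \<le> K0 * (3 * (\<bar>w 1 p\<bar> + \<bar>w 2 p\<bar> + \<bar>w 3 p\<bar> + \<bar>w 4 p\<bar>))"
    proof (rule mult_left_mono)
      show "\<bar>w 1 p\<bar> + \<bar>w 2 p\<bar> + \<bar>w 3 p\<bar> + \<bar>sU p - sV p\<bar> + \<bar>kU p - kV p\<bar> \<le> 3 * (\<bar>w 1 p\<bar> + \<bar>w 2 p\<bar> + \<bar>w 3 p\<bar> + \<bar>w 4 p\<bar>)"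
      proof -
        have gen: "A + B + C + E + F \<le> 3 * (A + B + C + G)"
          if "E \<le> A" "F \<le> A" "0 \<le> A" "0 \<le> B" "0 \<le> C" "0 \<le> G" for A B C E F G :: real
          using that by (simp add: distrib_left)
        show ?thesis by (rule gen) (use dsb[of p] in auto)
      qed
      show "0 \<le> K0" using K01 by simp
    qed
    also have "\<dots> \<le> K0 * (3 * (4 * K0 * (\<Sum>j<4. \<bar>q j p\<bar>)))"
      using wsum[OF pB'] K01 by (intro mult_left_mono) auto
    finally show ?thesis by (simp add: algebra_simps)
  qed
  define D where "D = {p. \<bar>fst p - c\<bar> \<le> \<epsilon> \<and> \<bar>snd p - \<phi>0\<bar> \<le> \<epsilon> - K0 * \<bar>fst p - c\<bar>}"
  have DB: "D \<subseteq> B"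
  proof
    fix p assume "p \<in> D"
    then have h: "\<bar>fst p - c\<bar> \<le> \<epsilon>" "\<bar>snd p - \<phi>0\<bar> \<le> \<epsilon> - K0 * \<bar>fst p - c\<bar>" unfolding D_def by auto
    have "K0 * \<bar>fst p - c\<bar> \<ge> 0" using K01 by simp
    then have "\<bar>snd p - \<phi>0\<bar> \<le> \<epsilon>" using h by linarith
    then show "p \<in> B" using h unfolding B_def by (cases p) (auto simp: abs_le_iff)
  qed
  have qz: "q i p = 0" if "i < 4" "p \<in> D" for i p
  proof (rule maxprin[where K = "12 * K0 * K0" and Dq = Dq and \<beta> = \<beta>, OF D_def _ _ _ _ _ _ that])
    show "0 \<le> K0" using K01 by simp
    show "0 \<le> 12 * K0 * K0" using K01 by simp
    show "\<And>i p. i < 4 \<Longrightarrow> p \<in> D \<Longrightarrow> (q i has_derivative Dq i p) (at p)" using der DB BO by blast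
    show "\<And>i p. i < 4 \<Longrightarrow> p \<in> D \<Longrightarrow> \<bar>\<beta> i p\<bar> \<le> K0" using \<beta>b DB by blast
    show "\<And>i p. i < 4 \<Longrightarrow> p \<in> D \<Longrightarrow> \<bar>Dq i p (1, \<beta> i p)\<bar> \<le> 12 * K0 * K0 * (\<Sum>j<4. \<bar>q j p\<bar>)"
      using dqb DB by blast
    show "\<And>i p. i < 4 \<Longrightarrow> p \<in> D \<Longrightarrow> fst p = c \<Longrightarrow> q i p = 0"
    proof -
      fix i p assume "i < (4::nat)" "p \<in> D" "fst p = c"
      then have "(c, snd p) \<in> Om" using DB BO by (metis prod.collapse subsetD)
      then have "U (c, snd p) = V (c, snd p)" by (rule init)
      then have "U p = V p" using \<open>fst p = c\<close> by (metis prod.collapse)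
      then show "q i p = 0" by (simp add: q_def w_def u_def v_def)
    qed
  qed
  have UVD: "U p = V p" if "p \<in> D" for p
  proof -
    have z: "q 0 p = 0" "q 1 p = 0" "q 2 p = 0" "q 3 p = 0" using qz that by auto
    have "w 1 p = 0" "w 2 p = 0" "w 3 p = 0" "w 4 p = 0" using winv[of p] z by simp_all
    then have "U p $ k = V p $ k" for k
      unfolding w_def u_def v_def using exhaust_4[of k] by auto
    then show ?thesis by (simp add: vec_eq_iff)
  qed
  define e where "e = \<epsilon> / (1 + K0)"
  have epos: "e > 0" unfolding e_def using \<epsilon>pos K01 by simp
  have "ball (c, \<phi>0) e \<subseteq> D"
  proof
    fix p assume "p \<in> ball (c, \<phi>0) e"
    then have dp: "dist (c, \<phi>0) p < e" by simp
    have d1: "\<bar>fst p - c\<bar> < e" "\<bar>snd p - \<phi>0\<bar> < e"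
    proof -
      have "dist c (fst p) \<le> dist (c, \<phi>0) p" "dist \<phi>0 (snd p) \<le> dist (c, \<phi>0) p"
        by (metis dist_fst_le fst_conv) (metis dist_snd_le snd_conv)
      then show "\<bar>fst p - c\<bar> < e" "\<bar>snd p - \<phi>0\<bar> < e" using dp by (auto simp: dist_real_def abs_minus_commute)
    qed
    have ee: "e + K0 * e = \<epsilon>"
    proof -
      have "1 + K0 \<noteq> 0" using K01 by simp
      then have "e * (1 + K0) = \<epsilon>" unfolding e_def by simp
      then show ?thesis by (simp add: algebra_simps)
    qed
    have "K0 * \<bar>fst p - c\<bar> \<le> K0 * e" using d1 K01 by (intro mult_left_mono) auto
    then have "\<bar>snd p - \<phi>0\<bar> \<le> \<epsilon> - K0 * \<bar>fst p - c\<bar>" using d1 ee by linarith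
    moreover have "K0 * e \<ge> 0" using K01 epos by simp
    then have "\<bar>fst p - c\<bar> \<le> \<epsilon>" using d1 ee by linarith
    ultimately show "p \<in> D" unfolding D_def by simp
  qed
  then show ?thesis using UVD epos by blast
qed

theorem theorem3p3:
  fixes U V :: "real \<times> real \<Rightarrow> real^4" and c :: real and SU SV :: "(real \<times> real) set"
  assumes "c > 0"
    and "open SU" and "\<forall>phi. (c, phi) \<in> SU" and "\<forall>p\<in>SU. fst p > 0"
    and "open SV" and "\<forall>phi. (c, phi) \<in> SV" and "\<forall>p\<in>SV. fst p > 0"
    and "smooth_on SU U" and "solves_on SU U"
    and "smooth_on SV V" and "solves_on SV V"
    and "\<forall>phi. det (matA c phi (U (c, phi))) \<noteq> 0"
    and "\<forall>phi. U (c, phi) = V (c, phi)"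
  shows "\<exists>W. open W \<and> (\<forall>phi. (c, phi) \<in> W) \<and> (\<forall>p\<in>W. U p = V p)"
proof -
  have "Ck_on (Suc 0) SU U" using assms(8) unfolding smooth_on_def by blast
  then obtain DU where DU: "\<forall>x\<in>SU. (U has_derivative DU x) (at x)" "\<And>h. continuous_on SU (\<lambda>x. DU x h)"
    by auto
  have "Ck_on (Suc 0) SV V" using assms(10) unfolding smooth_on_def by blast
  then obtain DV where DV: "\<forall>x\<in>SV. (V has_derivative DV x) (at x)" "\<And>h. continuous_on SV (\<lambda>x. DV x h)"
    by auto
  define Om where "Om = SU \<inter> SV"
  have loc: "\<exists>e>0. \<forall>p\<in>ball (c, \<phi>0) e. U p = V p" for \<phi>0
  proof (rule local_uniq[where Om = Om and DU = DU and DV = DV])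
    show "open Om" unfolding Om_def using assms(2,5) by auto
    show "(c, \<phi>0) \<in> Om" unfolding Om_def using assms(3,6) by auto
    show "\<And>p. p \<in> Om \<Longrightarrow> fst p > 0" unfolding Om_def using assms(4) by auto
    show "\<And>p. p \<in> Om \<Longrightarrow> (U has_derivative DU p) (at p)" unfolding Om_def using DU(1) by auto
    show "\<And>p. p \<in> Om \<Longrightarrow> (V has_derivative DV p) (at p)" unfolding Om_def using DV(1) by auto
    show "\<And>h. continuous_on Om (\<lambda>p. DU p h)" unfolding Om_def
      using DU(2) continuous_on_subset by (metis Int_lower1)
    show "\<And>h. continuous_on Om (\<lambda>p. DV p h)" unfolding Om_def
      using DV(2) continuous_on_subset by (metis Int_lower2)
    show "\<And>p. p \<in> Om \<Longrightarrow> matA (fst p) (snd p) (U p) *v DU p (1,0) + matB (fst p) (snd p) (U p) *v DU p (0,1) + matC (fst p) (snd p) (U p) *v U p = 0"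
    proof -
      fix p assume "p \<in> Om"
      then have pS: "p \<in> SU" unfolding Om_def by auto
      have "DU p = frechet_derivative U (at p)" using DU(1) pS frechet_derivative_at by blast
      then show "matA (fst p) (snd p) (U p) *v DU p (1,0) + matB (fst p) (snd p) (U p) *v DU p (0,1) + matC (fst p) (snd p) (U p) *v U p = 0"
        using assms(9) pS unfolding solves_on_def d_r_def d_phi_def by auto
    qed
    show "\<And>p. p \<in> Om \<Longrightarrow> matA (fst p) (snd p) (V p) *v DV p (1,0) + matB (fst p) (snd p) (V p) *v DV p (0,1) + matC (fst p) (snd p) (V p) *v V p = 0"
    proof -
      fix p assume "p \<in> Om"
      then have pS: "p \<in> SV" unfolding Om_def by auto
      have "DV p = frechet_derivative V (at p)" using DV(1) pS frechet_derivative_at by blast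
      then show "matA (fst p) (snd p) (V p) *v DV p (1,0) + matB (fst p) (snd p) (V p) *v DV p (0,1) + matC (fst p) (snd p) (V p) *v V p = 0"
        using assms(11) pS unfolding solves_on_def d_r_def d_phi_def by auto
    qed
    show "det (matA c \<phi>0 (U (c, \<phi>0))) \<noteq> 0" using assms(12) by blast
    show "\<And>\<phi>. (c, \<phi>) \<in> Om \<Longrightarrow> U (c, \<phi>) = V (c, \<phi>)" using assms(13) by blast
  qed
  define W where "W = interior {p. U p = V p}"
  have "open W" unfolding W_def by simp
  moreover have "(c, phi) \<in> W" for phi
  proof -
    obtain e where "e > 0" "\<forall>p\<in>ball (c, phi) e. U p = V p" using loc by blast
    then show ?thesis unfolding W_def mem_interior by blast
  qed
  moreover have "\<forall>p\<in>W. U p = V p" unfolding W_def using interior_subset by blast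
  ultimately show ?thesis by blast
qed

end
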